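(* Let $V$ be a vertex operator algebra and $W_1,W_2,W_3$ discretely $\mathbb{R}$-graded $V$-modules such that $W_1$, $W_2$ and the contragredient module $W_3'$ are $C_1$-cofinite. Then the space of intertwining operators of type $\binom{W_3}{W_1W_2}$ is finite-dimensional (i.e. the fusion rule $N^{W_3}_{W_1W_2}$ is finite).
   Context: $V_+=\coprod_{n>0}V_{(n)}$; for a $V$-module $W$, $C_1(W)$ is the span of all $u_{-1}w$ with $u\in V_+$, $w\in W$, and $W$ is $C_1$-cofinite if $\dim W/C_1(W)<\infty$. A discretely $\mathbb{R}$-graded $V$-module is a $V$-module graded by $L(0)$-eigenvalues in $\mathbb{R}$ such that for each $r$ the sum of homogeneous subspaces of weight $\le r$ is finite-dimensional. Intertwining operators are in the sense of Frenkel–Huang–Lepowsky. *)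

theory Defs
  imports Complex_Main
begin

text \<open>A vertex operator \<open>Y(u,x) = \<Sum>n u_n x^{-n-1}\<close> is recorded by its modes:
  \<open>Y u n v = u_n v\<close>.\<close>

record 'v voa =
  vscale :: "complex \<Rightarrow> 'v \<Rightarrow> 'v"
  vY     :: "'v \<Rightarrow> int \<Rightarrow> 'v \<Rightarrow> 'v"
  vac    :: 'v
  omega  :: 'v

record ('v, 'w) vmod =
  mscale :: "complex \<Rightarrow> 'w \<Rightarrow> 'w"
  mY     :: "'v \<Rightarrow> int \<Rightarrow> 'w \<Rightarrow> 'w"

definition is_linear :: "(complex \<Rightarrow> 'a \<Rightarrow> 'a) \<Rightarrow> (complex \<Rightarrow> 'b \<Rightarrow> 'b) \<Rightarrow> ('a::ab_group_add \<Rightarrow> 'b::ab_group_add) \<Rightarrow> bool" where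
  "is_linear s t f \<longleftrightarrow> (\<forall>x y. f (x + y) = f x + f y) \<and> (\<forall>c x. f (s c x) = t c (f x))"

definition Vn :: "('v::ab_group_add) voa \<Rightarrow> int \<Rightarrow> 'v set" where
  "Vn V n = {v. vY V (omega V) 1 v = vscale V (of_int n) v}"

definition L1pow :: "('v::ab_group_add) voa \<Rightarrow> nat \<Rightarrow> 'v \<Rightarrow> 'v" where
  "L1pow V j = (vY V (omega V) 2) ^^ j"

definition is_voa :: "('v::ab_group_add) voa \<Rightarrow> bool" where
  "is_voa V \<longleftrightarrow>
     vector_space (vscale V)
   \<and> (\<forall>u n. is_linear (vscale V) (vscale V) (vY V u n))
   \<and> (\<forall>v n. is_linear (vscale V) (vscale V) (\<lambda>u. vY V u n v))
   \<comment> \<open>truncation\<close>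
   \<and> (\<forall>u v. \<exists>N. \<forall>n\<ge>N. vY V u n v = 0)
   \<comment> \<open>grading by \<open>L(0)\<close>-eigenvalues in \<open>\<int>\<close>\<close>
   \<and> (\<forall>v. \<exists>S comp. finite S \<and> (\<forall>n\<in>S. comp n \<in> Vn V n) \<and> v = (\<Sum>n\<in>S. comp n))
   \<and> (\<forall>n. \<exists>B. finite B \<and> Vn V n \<subseteq> module.span (vscale V) B)
   \<and> (\<exists>N. \<forall>n<N. Vn V n = {0})
   \<and> omega V \<in> Vn V 2
   \<comment> \<open>vacuum and creation\<close>
   \<and> (\<forall>n v. vY V (vac V) n v = (if n = -1 then v else 0))
   \<and> (\<forall>v. vY V v (-1) (vac V) = v \<and> (\<forall>n\<ge>0. vY V v n (vac V) = 0))
   \<comment> \<open>Jacobi identity (Borcherds component form)\<close>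
   \<and> (\<forall>u v w p q r. \<exists>N. \<forall>M\<ge>N.
        (\<Sum>i=0..M. vscale V (of_int p gchoose i) (vY V (vY V u (r + int i) v) (p + q - int i) w))
      = (\<Sum>i=0..M. vscale V ((-1) ^ i * (of_int r gchoose i))
           (vY V u (p + r - int i) (vY V v (q + int i) w)
            - vscale V ((-1) powi r) (vY V v (q + r - int i) (vY V u (p + int i) w)))))
   \<comment> \<open>Virasoro relations, \<open>L(m) = \<omega>_{m+1}\<close>\<close>
   \<and> (\<exists>c::complex. \<forall>m n v.
        vY V (omega V) (m + 1) (vY V (omega V) (n + 1) v)
        - vY V (omega V) (n + 1) (vY V (omega V) (m + 1) v)
      = vscale V (of_int (m - n)) (vY V (omega V) (m + n + 1) v)
        + vscale V ((of_int (m ^ 3 - m) / 12) * (if m + n = 0 then 1 else 0) * c) v)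
   \<comment> \<open>\<open>L(-1)\<close>-derivative property: \<open>(L(-1)v)_n = -n v_{n-1}\<close>\<close>
   \<and> (\<forall>v n w. vY V (vY V (omega V) 0 v) n w = vscale V (- of_int n) (vY V v (n - 1) w))"

definition Wr :: "('v::ab_group_add) voa \<Rightarrow> ('v, 'w::ab_group_add) vmod \<Rightarrow> real \<Rightarrow> 'w set" where
  "Wr V W r = {w. mY W (omega V) 1 w = mscale W (of_real r) w}"

definition is_vmod :: "('v::ab_group_add) voa \<Rightarrow> ('v, 'w::ab_group_add) vmod \<Rightarrow> bool" where
  "is_vmod V W \<longleftrightarrow>
     vector_space (mscale W)
   \<and> (\<forall>u n. is_linear (mscale W) (mscale W) (mY W u n))
   \<and> (\<forall>w n. is_linear (vscale V) (mscale W) (\<lambda>u. mY W u n w))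
   \<and> (\<forall>u w. \<exists>N. \<forall>n\<ge>N. mY W u n w = 0)
   \<and> (\<forall>n w. mY W (vac V) n w = (if n = -1 then w else 0))
   \<and> (\<forall>u v w p q r. \<exists>N. \<forall>M\<ge>N.
        (\<Sum>i=0..M. mscale W (of_int p gchoose i) (mY W (vY V u (r + int i) v) (p + q - int i) w))
      = (\<Sum>i=0..M. mscale W ((-1) ^ i * (of_int r gchoose i))
           (mY W u (p + r - int i) (mY W v (q + int i) w)
            - mscale W ((-1) powi r) (mY W v (q + r - int i) (mY W u (p + int i) w)))))
   \<and> (\<forall>v n w. mY W (vY V (omega V) 0 v) n w = mscale W (- of_int n) (mY W v (n - 1) w))"

text \<open>Discretely \<open>\<real>\<close>-graded module: graded by real \<open>L(0)\<close>-eigenvalues, and for each \<open>r\<close>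
  the sum of the homogeneous subspaces of weight \<open>\<le> r\<close> is finite-dimensional.\<close>
definition is_drg_mod :: "('v::ab_group_add) voa \<Rightarrow> ('v, 'w::ab_group_add) vmod \<Rightarrow> bool" where
  "is_drg_mod V W \<longleftrightarrow> is_vmod V W
   \<and> (\<forall>w. \<exists>S comp. finite S \<and> (\<forall>r\<in>S. comp r \<in> Wr V W r) \<and> w = (\<Sum>r\<in>S. comp r))
   \<and> (\<forall>r. \<exists>B. finite B \<and>
          module.span (mscale W) (\<Union>s\<in>{..r}. Wr V W s) \<subseteq> module.span (mscale W) B)"

definition Vplus :: "('v::ab_group_add) voa \<Rightarrow> 'v set" where
  "Vplus V = module.span (vscale V) (\<Union>n\<in>{0<..}. Vn V n)"

definition C1 :: "('v::ab_group_add) voa \<Rightarrow> ('v, 'w::ab_group_add) vmod \<Rightarrow> 'w set" where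
  "C1 V W = module.span (mscale W) {mY W u (-1) w | u w. u \<in> Vplus V}"

definition C1_cofinite :: "('v::ab_group_add) voa \<Rightarrow> ('v, 'w::ab_group_add) vmod \<Rightarrow> bool" where
  "C1_cofinite V W \<longleftrightarrow> (\<exists>F. finite F \<and> module.span (mscale W) (F \<union> C1 V W) = UNIV)"

text \<open>Elements of \<open>W'\<close> are linear functionals on \<open>W\<close> vanishing on all but finitely many
  homogeneous subspaces \<open>W_[r]\<close>.\<close>
definition contra :: "('v::ab_group_add) voa \<Rightarrow> ('v, 'w::ab_group_add) vmod \<Rightarrow> ('w \<Rightarrow> complex) set" where
  "contra V W = {f. (\<forall>x y. f (x + y) = f x + f y) \<and> (\<forall>c x. f (mscale W c x) = c * f x)
                  \<and> (\<exists>R. finite R \<and> (\<forall>r. r \<notin> R \<longrightarrow> (\<forall>w\<in>Wr V W r. f w = 0)))}"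

text \<open>Modes of the contragredient vertex operator
  \<open>\<langle>Y'(v,x)w',w\<rangle> = \<langle>w', Y(e^{xL(1)}(-x^{-2})^{L(0)} v, x^{-1}) w\<rangle>\<close> for \<open>v \<in> V_(k)\<close>:
  \<open>\<langle>v'_n w', w\<rangle> = (-1)^k \<Sum>_{j\<ge>0} (1/j!) \<langle>w', (L(1)^j v)_{2k-j-n-2} w\<rangle>\<close>
  (a finite sum, since \<open>L(1)^j v \<in> V_(k-j)\<close> vanishes for large \<open>j\<close>).\<close>
definition contra_mode :: "('v::ab_group_add) voa \<Rightarrow> ('v, 'w::ab_group_add) vmod \<Rightarrow> int \<Rightarrow> 'v \<Rightarrow> int
    \<Rightarrow> ('w \<Rightarrow> complex) \<Rightarrow> ('w \<Rightarrow> complex)" where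
  "contra_mode V W k v n f = (\<lambda>w. (-1) powi k *
      (\<Sum>j. (1 / fact j) * f (mY W (L1pow V j v) (2 * k - int j - n - 2) w)))"

definition fun_span :: "('w \<Rightarrow> complex) set \<Rightarrow> ('w \<Rightarrow> complex) set" where
  "fun_span S = {(\<lambda>w. \<Sum>i<m. c i * g i w) | (m::nat) c g. \<forall>i<m. g i \<in> S}"

text \<open>\<open>C_1(W')\<close>: span of \<open>u_{-1} w'\<close> for \<open>u \<in> V_+\<close>; by linearity in \<open>u\<close> it suffices to take
  homogeneous \<open>u\<close> of positive weight.\<close>
definition C1_contra :: "('v::ab_group_add) voa \<Rightarrow> ('v, 'w::ab_group_add) vmod \<Rightarrow> ('w \<Rightarrow> complex) set" where
  "C1_contra V W = fun_span {contra_mode V W k u (-1) f | k u f. k > 0 \<and> u \<in> Vn V k \<and> f \<in> contra V W}"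

definition contra_C1_cofinite :: "('v::ab_group_add) voa \<Rightarrow> ('v, 'w::ab_group_add) vmod \<Rightarrow> bool" where
  "contra_C1_cofinite V W \<longleftrightarrow>
     (\<exists>F. finite F \<and> F \<subseteq> contra V W \<and> contra V W \<subseteq> fun_span (F \<union> C1_contra V W))"

text \<open>\<open>\<Y>(w_1,x)w_2 = \<Sum>_{n\<in>\<complex>} (w_1)_n w_2 x^{-n-1}\<close>, recorded as \<open>I w1 n w2 = (w_1)_n w_2\<close>.\<close>
definition is_intertwining ::
  "('v::ab_group_add) voa \<Rightarrow> ('v, 'w1::ab_group_add) vmod \<Rightarrow> ('v, 'w2::ab_group_add) vmod
   \<Rightarrow> ('v, 'w3::ab_group_add) vmod \<Rightarrow> ('w1 \<Rightarrow> complex \<Rightarrow> 'w2 \<Rightarrow> 'w3) \<Rightarrow> bool" where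
  "is_intertwining V W1 W2 W3 I \<longleftrightarrow>
     (\<forall>w1 n. is_linear (mscale W2) (mscale W3) (I w1 n))
   \<and> (\<forall>w2 n. is_linear (mscale W1) (mscale W3) (\<lambda>w1. I w1 n w2))
   \<comment> \<open>lower truncation\<close>
   \<and> (\<forall>w1 w2 n. \<exists>N. \<forall>m\<ge>N. I w1 (n + of_nat m) w2 = 0)
   \<comment> \<open>\<open>L(-1)\<close>-derivative property\<close>
   \<and> (\<forall>w1 n w2. I (mY W1 (omega V) 0 w1) n w2 = mscale W3 (- n) (I w1 (n - 1) w2))
   \<comment> \<open>Jacobi identity (component form)\<close>
   \<and> (\<forall>v w1 w2 (p::int) (q::int) (a::complex). \<exists>N. \<forall>M\<ge>N.
        (\<Sum>i=0..M. mscale W3 (of_int p gchoose i)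
            (I (mY W1 v (q + int i) w1) (of_int p + a - of_nat i) w2))
      = (\<Sum>i=0..M. mscale W3 ((-1) ^ i * (of_int q gchoose i))
           (mY W3 v (p + q - int i) (I w1 (a + of_nat i) w2)
            - mscale W3 ((-1) powi q) (I w1 (of_int q + a - of_nat i) (mY W2 v (p + int i) w2)))))"

definition intertwining_space_fin_dim ::
  "('v::ab_group_add) voa \<Rightarrow> ('v, 'w1::ab_group_add) vmod \<Rightarrow> ('v, 'w2::ab_group_add) vmod
   \<Rightarrow> ('v, 'w3::ab_group_add) vmod \<Rightarrow> bool" where
  "intertwining_space_fin_dim V W1 W2 W3 \<longleftrightarrow>
     (\<exists>F. finite F \<and> F \<subseteq> {I. is_intertwining V W1 W2 W3 I} \<and>
        (\<forall>I. is_intertwining V W1 W2 W3 I \<longrightarrow>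
           (\<exists>c. I = (\<lambda>w1 n w2. \<Sum>J\<in>F. mscale W3 (c J) (J w1 n w2)))))"

end

theory Submission
  imports Defs "HOL-Library.Function_Algebras"
begin

lemma is_linear_add: "is_linear s t f \<Longrightarrow> f (x + y) = f x + f y"
  unfolding is_linear_def by blast
lemma is_linear_scale: "is_linear s t f \<Longrightarrow> f (s c x) = t c (f x)"
  unfolding is_linear_def by blast
lemma is_linear_additive: "is_linear s t f \<Longrightarrow> additive f"
  unfolding is_linear_def additive_def by blast
lemma is_linear_zero: "is_linear s t f \<Longrightarrow> f 0 = 0"
  using is_linear_additive additive.zero by blast
lemma is_linear_diff: "is_linear s t f \<Longrightarrow> f (x - y) = f x - f y"
  using is_linear_additive additive.diff by blast
lemma is_linear_sum: "is_linear s t f \<Longrightarrow> f (sum g A) = (\<Sum>x\<in>A. f (g x))"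
  using is_linear_additive additive.sum by blast

context vector_space begin

lemma eigen_indep:
  assumes La: "\<And>x y. L (x + y) = L x + L y" and Ls: "\<And>c x. L (c *s x) = c *s L x"
  shows "finite S \<Longrightarrow> (\<forall>s\<in>S. L (y s) = ev s *s y s) \<Longrightarrow> inj_on ev S \<Longrightarrow> sum y S = 0
    \<Longrightarrow> (\<forall>s\<in>S. y s = 0)"
proof (induction S arbitrary: y rule: finite_induct)
  case empty
  then show ?case by simp
next
  case (insert a S)
  have addL: "additive L" using La by (simp add: additive_def)
  have s0: "y a + sum y S = 0" using insert by simp
  have "L (y a + sum y S) = 0" using s0 additive.zero[OF addL] by simp
  moreover have "L (sum y S) = (\<Sum>s\<in>S. ev s *s y s)"
    unfolding additive.sum[OF addL] using insert.prems(1) by (auto intro: sum.cong)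
  ultimately have s1: "ev a *s y a + (\<Sum>s\<in>S. ev s *s y s) = 0"
    using insert.prems(1) La by simp
  have ya: "y a = - sum y S" using s0 by (simp add: eq_neg_iff_add_eq_0)
  have "(\<Sum>s\<in>S. (ev s - ev a) *s y s) = (\<Sum>s\<in>S. ev s *s y s) - ev a *s sum y S"
    by (simp add: scale_left_diff_distrib sum_subtractf scale_sum_right)
  also have "\<dots> = 0" using s1 ya by (simp add: algebra_simps)
  finally have s2: "(\<Sum>s\<in>S. (ev s - ev a) *s y s) = 0" .
  have "\<forall>s\<in>S. (ev s - ev a) *s y s = 0"
  proof (rule insert.IH)
    show "\<forall>s\<in>S. L ((ev s - ev a) *s y s) = ev s *s ((ev s - ev a) *s y s)"
      using insert.prems(1) Ls by (simp add: mult.commute)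
    show "inj_on ev S" using insert.prems(2) by (simp add: inj_on_insert)
  qed (fact s2)
  moreover have "\<forall>s\<in>S. ev s \<noteq> ev a" using insert.prems(2) insert.hyps(2) by (auto simp: inj_on_def)
  ultimately have yS: "\<forall>s\<in>S. y s = 0" by simp
  then have "sum y S = 0" by simp
  with s0 yS show ?case by simp
qed

lemma hom_proj:
  assumes La: "\<And>x y. L (x + y) = L x + L y" and Ls: "\<And>c x. L (c *s x) = c *s L x"
    and ev: "inj ev"
    and T: "\<forall>t\<in>T. \<exists>r. L t = ev r *s t"
    and w: "w \<in> span T" "L w = ev r *s w"
  shows "w \<in> span {t\<in>T. L t = ev r *s t}"
proof -
  have addL: "additive L" using La by (simp add: additive_def)
  obtain S0 u where S0: "finite S0" "S0 \<subseteq> T" and wS: "w = (\<Sum>t\<in>S0. u t *s t)"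
    using w(1) unfolding span_explicit by blast
  define wt where "wt t = (SOME r. L t = ev r *s t)" for t
  have wt: "L t = ev (wt t) *s t" if "t \<in> T" for t
    using T that unfolding wt_def by (metis (mono_tags, lifting) someI_ex)
  define G where "G \<rho> = (\<Sum>t\<in>{t\<in>S0. wt t = \<rho>}. u t *s t)" for \<rho>
  have sumG: "(\<Sum>t\<in>S0. u t *s t) = (\<Sum>\<rho>\<in>wt`S0. G \<rho>)"
    unfolding G_def using sum.image_gen[OF S0(1)] by blast
  define P where "P = insert r (wt`S0)"
  have finP: "finite P" using S0 by (simp add: P_def)
  have sumGP: "sum G P = sum G (wt`S0)"
  proof (cases "r \<in> wt`S0")
    case True then show ?thesis by (simp add: P_def insert_absorb)
  next
    case False
    then have "{t\<in>S0. wt t = r} = {}" by auto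
    then have "G r = 0" unfolding G_def by (metis sum.empty)
    with False S0 show ?thesis by (simp add: P_def)
  qed
  define Y where "Y \<rho> = G \<rho> - (if \<rho> = r then w else 0)" for \<rho>
  have "sum Y P = sum G P - (\<Sum>\<rho>\<in>P. (if \<rho> = r then w else 0))"
    by (simp add: Y_def sum_subtractf)
  also have "\<dots> = 0" using sumGP sumG wS finP by (simp add: P_def)
  finally have sY: "sum Y P = 0" .
  have LG: "L (G \<rho>) = ev \<rho> *s G \<rho>" for \<rho>
  proof -
    have "L (G \<rho>) = (\<Sum>t\<in>{t\<in>S0. wt t = \<rho>}. L (u t *s t))"
      unfolding G_def additive.sum[OF addL] ..
    also have "\<dots> = (\<Sum>t\<in>{t\<in>S0. wt t = \<rho>}. ev \<rho> *s (u t *s t))"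
    proof (rule sum.cong)
      fix t assume "t \<in> {t\<in>S0. wt t = \<rho>}"
      then have "t \<in> T" "wt t = \<rho>" using S0 by auto
      then show "L (u t *s t) = ev \<rho> *s (u t *s t)"
        using wt[of t] Ls by (simp add: mult.commute)
    qed simp
    also have "\<dots> = ev \<rho> *s G \<rho>" by (simp add: G_def scale_sum_right)
    finally show ?thesis .
  qed
  have "\<forall>\<rho>\<in>P. Y \<rho> = 0"
  proof (rule eigen_indep[OF La Ls finP _ _ sY, of ev])
    show "\<forall>s\<in>P. L (Y s) = ev s *s Y s"
      using LG w(2) additive.diff[OF addL] additive.zero[OF addL] by (auto simp: Y_def scale_right_diff_distrib)
    show "inj_on ev P" using ev by (simp add: inj_on_def inj_def)
  qed
  then have "Y r = 0" by (simp add: P_def)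
  then have wG: "w = G r" by (simp add: Y_def)
  show ?thesis unfolding wG G_def
  proof (rule span_sum)
    fix t assume "t \<in> {t\<in>S0. wt t = r}"
    then have "t \<in> T" "wt t = r" using S0 by auto
    then have "t \<in> {t\<in>T. L t = ev r *s t}" using wt[of t] by auto
    then show "u t *s t \<in> span {t\<in>T. L t = ev r *s t}" by (intro span_scale span_base)
  qed
qed

lemma eigen_lower_bound:
  assumes La: "\<And>x y. L (x + y) = L x + L y" and Ls: "\<And>c x. L (c *s x) = c *s L x"
    and ev: "inj ev"
    and B: "finite B" "span (\<Union>s\<in>{..(0::real)}. {w. L w = ev s *s w}) \<subseteq> span B"
  shows "\<exists>b. \<forall>r<b. \<forall>w. L w = ev r *s w \<longrightarrow> w = 0"
proof -
  define Q where "Q = {r. r \<le> 0 \<and> (\<exists>w. w \<noteq> 0 \<and> L w = ev r *s w)}"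
  define v where "v r = (SOME w. w \<noteq> 0 \<and> L w = ev r *s w)" for r
  have v: "v r \<noteq> 0" "L (v r) = ev r *s v r" if "r \<in> Q" for r
    using that unfolding Q_def v_def by (metis (mono_tags, lifting) mem_Collect_eq someI_ex)+
  have injv: "inj_on v Q"
  proof (rule inj_onI)
    fix r r' assume rr: "r \<in> Q" "r' \<in> Q" "v r = v r'"
    then have "ev r *s v r = ev r' *s v r" using v[of r] v[of r'] by simp
    then have "ev r = ev r'" using v(1)[OF rr(1)] by simp
    then show "r = r'" using ev by (simp add: inj_def)
  qed
  have indep: "independent (v`Q)"
  proof
    assume "dependent (v`Q)"
    then obtain t u where t: "finite t" "t \<subseteq> v`Q" "(\<Sum>x\<in>t. u x *s x) = 0" and nz: "\<exists>x\<in>t. u x \<noteq> 0"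
      unfolding dependent_explicit by blast
    define ev' where "ev' x = ev (inv_into Q v x)" for x
    have Lx: "L x = ev' x *s x" if "x \<in> t" for x
    proof -
      from that t(2) obtain r where r: "r \<in> Q" "x = v r" by auto
      then have "inv_into Q v x = r" using injv by (simp add: inv_into_f_f)
      then show ?thesis using v(2)[OF r(1)] r by (simp add: ev'_def)
    qed
    have "\<forall>x\<in>t. u x *s x = 0"
    proof (rule eigen_indep[OF La Ls t(1) _ _ t(3), of ev'])
      show "\<forall>x\<in>t. L (u x *s x) = ev' x *s u x *s x"
        using Lx Ls by (simp add: mult.commute)
      show "inj_on ev' t"
      proof (rule inj_onI)
        fix x y assume "x \<in> t" "y \<in> t" "ev' x = ev' y"
        then have "inv_into Q v x = inv_into Q v y" "x \<in> v`Q" "y \<in> v`Q"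
          using ev t(2) by (auto simp: ev'_def inj_def)
        then show "x = y" by (metis f_inv_into_f)
      qed
    qed
    moreover have "\<forall>x\<in>t. x \<noteq> 0" using t(2) v(1) by auto
    ultimately show False using nz by simp
  qed
  have "v`Q \<subseteq> span (\<Union>s\<in>{..(0::real)}. {w. L w = ev s *s w})"
  proof
    fix x assume "x \<in> v`Q"
    then obtain r where r: "r \<in> Q" "x = v r" by auto
    then have "x \<in> (\<Union>s\<in>{..(0::real)}. {w. L w = ev s *s w})" using v(2)[OF r(1)] by (auto simp: Q_def)
    then show "x \<in> span (\<Union>s\<in>{..(0::real)}. {w. L w = ev s *s w})" by (rule span_base)
  qed
  with B have "v`Q \<subseteq> span B" by blast
  then have "finite (v`Q)" using independent_span_bound[OF B(1) indep] by blast
  then have finQ: "finite Q" using injv finite_image_iff by blast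
  define b where "b = (if Q = {} then 0 else Min Q)"
  have "\<forall>r<b. \<forall>w. L w = ev r *s w \<longrightarrow> w = 0"
  proof (intro allI impI)
    fix r w assume rb: "r < b" and w: "L w = ev r *s w"
    show "w = 0"
    proof (rule ccontr)
      assume "w \<noteq> 0"
      have "b \<le> 0"
      proof (cases "Q = {}")
        case False
        then have "Min Q \<in> Q" using finQ by simp
        then show ?thesis using False by (simp add: b_def Q_def)
      qed (simp add: b_def)
      then have "r \<in> Q" using rb w \<open>w \<noteq> 0\<close> by (auto simp: Q_def)
      then have "Min Q \<le> r" "b = Min Q" using finQ by (auto simp: b_def)
      then show False using rb by simp
    qed
  qed
  then show ?thesis by blast
qed

end

lemma sum_0_only: "(\<And>i. 1 \<le> i \<Longrightarrow> f i = 0) \<Longrightarrow> (\<Sum>i=0..(M::nat). f i) = f 0"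
  by (subst sum.mono_neutral_right[of "{0..M}" "{0}"]) auto

lemma sum_01_only: "1 \<le> M \<Longrightarrow> (\<And>i. 2 \<le> i \<Longrightarrow> f i = 0) \<Longrightarrow> (\<Sum>i=0..(M::nat). f i) = f 0 + f 1"
  by (subst sum.mono_neutral_right[of "{0..M}" "{0,1}"]) auto

lemma gch1: "((1::complex) gchoose i) = (if i = 0 then 1 else if i = 1 then 1 else 0)"
proof -
  have "of_nat (1 choose i) = ((of_nat 1::complex) gchoose i)" by (rule binomial_gbinomial)
  then show ?thesis by (cases i) (auto simp: binomial_eq_0)
qed

lemma gch0: "((0::complex) gchoose i) = (if i = 0 then 1 else 0)"
  by (simp add: gbinomial_0_left)

lemma vs_complex: "vector_space ((*) :: complex \<Rightarrow> complex \<Rightarrow> complex)"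
  by unfold_locales (auto simp: algebra_simps)

locale voaL =
  fixes V :: "('v::ab_group_add) voa"
  assumes voa: "is_voa V"
begin

lemma vsV: "vector_space (vscale V)" using voa by (simp add: is_voa_def)

sublocale V: vector_space "vscale V" by (rule vsV)

lemma linVY: "is_linear (vscale V) (vscale V) (vY V u n)" using voa by (simp add: is_voa_def)

lemma vir: "\<exists>c::complex. \<forall>m n v.
        vY V (omega V) (m + 1) (vY V (omega V) (n + 1) v)
        - vY V (omega V) (n + 1) (vY V (omega V) (m + 1) v)
      = vscale V (of_int (m - n)) (vY V (omega V) (m + n + 1) v)
        + vscale V ((of_int (m ^ 3 - m) / 12) * (if m + n = 0 then 1 else 0) * c) v"
  using voa unfolding is_voa_def by blast

lemma L1_lower: "v \<in> Vn V k \<Longrightarrow> vY V (omega V) 2 v \<in> Vn V (k - 1)"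
proof -
  assume v: "v \<in> Vn V k"
  obtain c where c: "\<forall>m n v.
        vY V (omega V) (m + 1) (vY V (omega V) (n + 1) v)
        - vY V (omega V) (n + 1) (vY V (omega V) (m + 1) v)
      = vscale V (of_int (m - n)) (vY V (omega V) (m + n + 1) v)
        + vscale V ((of_int (m ^ 3 - m) / 12) * (if m + n = 0 then 1 else 0) * c) v"
    using vir by blast
  from c[rule_format, of 0 1 v]
  have "vY V (omega V) 1 (vY V (omega V) 2 v) - vY V (omega V) 2 (vY V (omega V) 1 v)
      = vscale V (-1) (vY V (omega V) 2 v)" by simp
  moreover have "vY V (omega V) 2 (vY V (omega V) 1 v) = vscale V (of_int k) (vY V (omega V) 2 v)"
    using v is_linear_scale[OF linVY] by (simp add: Vn_def)
  ultimately have "vY V (omega V) 1 (vY V (omega V) 2 v) = vscale V (of_int k) (vY V (omega V) 2 v) + vscale V (-1) (vY V (omega V) 2 v)"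
    by (simp add: algebra_simps)
  also have "\<dots> = vscale V (of_int (k - 1)) (vY V (omega V) 2 v)"
    by (simp add: V.scale_left_diff_distrib)
  finally show ?thesis by (simp add: Vn_def)
qed

lemma L1pow_lower: "v \<in> Vn V k \<Longrightarrow> L1pow V j v \<in> Vn V (k - int j)"
proof (induction j arbitrary: k)
  case 0
  then show ?case by (simp add: L1pow_def)
next
  case (Suc j)
  then have "L1pow V j v \<in> Vn V (k - int j)" by simp
  then have "vY V (omega V) 2 (L1pow V j v) \<in> Vn V (k - int j - 1)" by (rule L1_lower)
  then show ?case by (simp add: L1pow_def algebra_simps)
qed

end

locale drgm = voaL V for V :: "('v::ab_group_add) voa" +
  fixes W :: "('v, 'w::ab_group_add) vmod"
  assumes drg: "is_drg_mod V W"
begin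

lemma vmod: "is_vmod V W" using drg by (simp add: is_drg_mod_def)
lemma vsW: "vector_space (mscale W)" using vmod by (simp add: is_vmod_def)

sublocale W: vector_space "mscale W" by (rule vsW)

lemma linY: "is_linear (mscale W) (mscale W) (mY W u n)" using vmod by (simp add: is_vmod_def)
lemma linU: "is_linear (vscale V) (mscale W) (\<lambda>u. mY W u n w)" using vmod by (simp add: is_vmod_def)

lemma jac: "\<exists>N. \<forall>M\<ge>N.
        (\<Sum>i=0..M. mscale W (of_int p gchoose i) (mY W (vY V u (r + int i) v) (p + q - int i) w))
      = (\<Sum>i=0..M. mscale W ((-1) ^ i * (of_int r gchoose i))
           (mY W u (p + r - int i) (mY W v (q + int i) w)
            - mscale W ((-1) powi r) (mY W v (q + r - int i) (mY W u (p + int i) w))))"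
  using vmod unfolding is_vmod_def by blast

lemma Lm1: "mY W (vY V (omega V) 0 v) n w = mscale W (- of_int n) (mY W v (n - 1) w)"
  using vmod unfolding is_vmod_def by blast

lemma grading: "\<exists>S comp. finite S \<and> (\<forall>r\<in>S. comp r \<in> Wr V W r) \<and> w = (\<Sum>r\<in>S. comp r)"
  using drg unfolding is_drg_mod_def by blast

lemma findim: "\<exists>B. finite B \<and>
          W.span (\<Union>s\<in>{..r}. Wr V W s) \<subseteq> W.span B"
  using drg unfolding is_drg_mod_def by blast

abbreviation L0 where "L0 \<equiv> mY W (omega V) 1"

lemma L0_add: "L0 (x + y) = L0 x + L0 y" using is_linear_add[OF linY] .
lemma L0_scale: "L0 (mscale W c x) = mscale W c (L0 x)" using is_linear_scale[OF linY] .

lemma Wr_iff: "w \<in> Wr V W r \<longleftrightarrow> L0 w = mscale W (of_real r) w" by (simp add: Wr_def)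

lemma Wr_subspace: "W.subspace (Wr V W r)"
  unfolding W.subspace_def Wr_def
  using is_linear_zero[OF linY] L0_add L0_scale
  by (auto simp: W.scale_right_distrib W.scale_left_commute)

lemma Wr_inter: "w \<in> Wr V W r \<Longrightarrow> w \<in> Wr V W s \<Longrightarrow> r \<noteq> s \<Longrightarrow> w = 0"
  unfolding Wr_def by auto

lemma lower_bound: "\<exists>b. \<forall>r<b. \<forall>w\<in>Wr V W r. w = 0"
proof -
  obtain B where B: "finite B" "W.span (\<Union>s\<in>{..0}. Wr V W s) \<subseteq> W.span B"
    using findim by blast
  have "\<exists>b. \<forall>r<b. \<forall>w. L0 w = mscale W (of_real r) w \<longrightarrow> w = 0"
  proof (rule W.eigen_lower_bound[OF L0_add L0_scale _ B(1)])
    show "inj (of_real :: real \<Rightarrow> complex)" by (simp add: inj_def)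
    show "W.span (\<Union>s\<in>{..0}. {w. L0 w = mscale W (of_real s) w}) \<subseteq> W.span B"
      using B(2) by (simp add: Wr_def)
  qed
  then show ?thesis by (auto simp: Wr_def)
qed

lemma shift: assumes u: "u \<in> Vn V k" and w: "w \<in> Wr V W t"
  shows "mY W u n w \<in> Wr V W (t + of_int k - of_int n - 1)"
proof -
  obtain N where N: "\<forall>M\<ge>N.
        (\<Sum>i=0..M. mscale W (of_int 1 gchoose i) (mY W (vY V (omega V) (0 + int i) u) (1 + n - int i) w))
      = (\<Sum>i=0..M. mscale W ((-1) ^ i * (of_int 0 gchoose i))
           (mY W (omega V) (1 + 0 - int i) (mY W u (n + int i) w)
            - mscale W ((-1) powi 0) (mY W u (n + 0 - int i) (mY W (omega V) (1 + int i) w))))"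
    using jac[of 1 "omega V" 0 u n w] by blast
  define M where "M = max N 1"
  have M: "M \<ge> N" "1 \<le> M" by (auto simp: M_def)
  have lhs: "(\<Sum>i=0..M. mscale W (of_int 1 gchoose i) (mY W (vY V (omega V) (0 + int i) u) (1 + n - int i) w))
     = mY W (vY V (omega V) 0 u) (1 + n) w + mY W (vY V (omega V) 1 u) n w"
    by (subst sum_01_only[OF M(2)]) (auto simp: gch1)
  have rhs: "(\<Sum>i=0..M. mscale W ((-1) ^ i * (of_int 0 gchoose i))
           (mY W (omega V) (1 + 0 - int i) (mY W u (n + int i) w)
            - mscale W ((-1) powi 0) (mY W u (n + 0 - int i) (mY W (omega V) (1 + int i) w))))
      = L0 (mY W u n w) - mY W u n (L0 w)"
    by (subst sum_0_only) (auto simp: gch0)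
  have e1: "mY W (vY V (omega V) 0 u) (1 + n) w = mscale W (- of_int (1 + n)) (mY W u n w)"
    using Lm1[of u "1 + n" w] by simp
  have e2: "mY W (vY V (omega V) 1 u) n w = mscale W (of_int k) (mY W u n w)"
    using u is_linear_scale[OF linU] by (simp add: Vn_def)
  have e3: "mY W u n (L0 w) = mscale W (of_real t) (mY W u n w)"
    using w is_linear_scale[OF linY] by (simp add: Wr_def)
  have eq: "mY W (vY V (omega V) 0 u) (1 + n) w + mY W (vY V (omega V) 1 u) n w = L0 (mY W u n w) - mY W u n (L0 w)"
    using N[rule_format, OF M(1)] unfolding lhs rhs .
  have "L0 (mY W u n w) = mscale W (- of_int (1 + n)) (mY W u n w) + mscale W (of_int k) (mY W u n w)
        + mscale W (of_real t) (mY W u n w)"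
    using eq_diff_eq[THEN iffD1, OF eq, symmetric] unfolding e1 e2 e3 .
  also have "\<dots> = mscale W (of_real (t + of_int k - of_int n - 1)) (mY W u n w)"
    by (simp only: W.scale_left_distrib[symmetric]) (simp add: algebra_simps)
  finally show ?thesis by (simp add: Wr_def)
qed

lemma real_eig: assumes Y: "L0 Y = mscale W lam Y" "Y \<noteq> 0" shows "\<exists>l. lam = of_real l"
proof (rule ccontr)
  assume nr: "\<nexists>l. lam = of_real l"
  obtain S comp where S: "finite S" "\<forall>r\<in>S. comp r \<in> Wr V W r" "Y = (\<Sum>r\<in>S. comp r)"
    using grading by blast
  have L0sum: "L0 (\<Sum>r\<in>S. comp r) = (\<Sum>r\<in>S. mscale W (of_real r) (comp r))"
    unfolding is_linear_sum[OF linY] using S(2) by (auto simp: Wr_def intro: sum.cong)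
  define y where "y r = mscale W (of_real r - lam) (comp r)" for r
  have "sum y S = (\<Sum>r\<in>S. mscale W (of_real r) (comp r)) - mscale W lam Y"
    unfolding y_def S(3) by (simp add: W.scale_left_diff_distrib sum_subtractf W.scale_sum_right)
  also have "\<dots> = 0" using Y(1) L0sum S(3) by simp
  finally have sy: "sum y S = 0" .
  have "\<forall>r\<in>S. y r = 0"
  proof (rule W.eigen_indep[OF L0_add L0_scale S(1) _ _ sy, of of_real])
    show "\<forall>r\<in>S. L0 (y r) = mscale W (of_real r) (y r)"
      using S(2) by (simp add: y_def L0_scale Wr_def W.scale_left_commute)
    show "inj_on (of_real :: real \<Rightarrow> complex) S" by (simp add: inj_on_def)
  qed
  moreover have "\<forall>r. of_real r - lam \<noteq> 0" using nr by auto
  ultimately have "\<forall>r\<in>S. comp r = 0" by (simp add: y_def)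
  then have "Y = 0" using S(3) by simp
  with Y(2) show False by simp
qed

lemma contra_add: "g \<in> contra V W \<Longrightarrow> g (x + y) = g x + g y" by (simp add: contra_def)
lemma contra_scale: "g \<in> contra V W \<Longrightarrow> g (mscale W c x) = c * g x" by (simp add: contra_def)
lemma contra_additive: "g \<in> contra V W \<Longrightarrow> additive g" by (simp add: contra_def additive_def)
lemma contra_zero: "g \<in> contra V W \<Longrightarrow> g 0 = 0" using contra_additive additive.zero by blast
lemma contra_diff: "g \<in> contra V W \<Longrightarrow> g (x - y) = g x - g y" using contra_additive additive.diff by blast
lemma contra_sum: "g \<in> contra V W \<Longrightarrow> g (sum f A) = (\<Sum>x\<in>A. g (f x))" using contra_additive additive.sum by blast
lemma contra_supp: "g \<in> contra V W \<Longrightarrow> \<exists>R. finite R \<and> (\<forall>r. r \<notin> R \<longrightarrow> (\<forall>w\<in>Wr V W r. g w = 0))"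
  by (simp add: contra_def)

lemma contra_comp: assumes g: "g \<in> contra V W" and u: "u \<in> Vn V k"
  shows "(\<lambda>w. g (mY W u n w)) \<in> contra V W"
proof -
  obtain R where R: "finite R" "\<forall>r. r \<notin> R \<longrightarrow> (\<forall>w\<in>Wr V W r. g w = 0)" using contra_supp[OF g] by blast
  define R' where "R' = (\<lambda>s. s - of_int k + of_int n + 1) ` R"
  have "finite R'" using R(1) by (simp add: R'_def)
  moreover have "\<forall>r. r \<notin> R' \<longrightarrow> (\<forall>w\<in>Wr V W r. g (mY W u n w) = 0)"
  proof (intro allI impI ballI)
    fix r w assume r: "r \<notin> R'" and w: "w \<in> Wr V W r"
    have "mY W u n w \<in> Wr V W (r + of_int k - of_int n - 1)" by (rule shift[OF u w])
    moreover have "r + of_int k - of_int n - 1 \<notin> R"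
    proof
      assume "r + of_int k - of_int n - 1 \<in> R"
      then have "(\<lambda>s. s - of_int k + of_int n + 1) (r + of_int k - of_int n - 1) \<in> R'"
        unfolding R'_def by (rule imageI)
      then show False using r by simp
    qed
    ultimately show "g (mY W u n w) = 0" using R(2) by blast
  qed
  ultimately show ?thesis
    using g is_linear_add[OF linY] is_linear_scale[OF linY]
    by (auto simp: contra_def)
qed

lemma separation: assumes all: "\<forall>g\<in>contra V W. g Y = 0" shows "Y = 0"
proof (rule ccontr)
  assume Y0: "Y \<noteq> 0"
  obtain S comp where S: "finite S" "\<forall>r\<in>S. comp r \<in> Wr V W r" "Y = (\<Sum>r\<in>S. comp r)"
    using grading by blast
  obtain r where r: "r \<in> S" "comp r \<noteq> 0" using S(3) Y0 by (metis sum.neutral)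
  define c where "c = comp r"
  define U where "U = W.span (\<Union>s\<in>UNIV - {r}. Wr V W s)"
  have cr: "L0 c = mscale W (of_real r) c" using S(2) r(1) by (simp add: c_def Wr_def)
  have cU: "c \<notin> U"
  proof
    assume "c \<in> U"
    then have "c \<in> W.span {t\<in>(\<Union>s\<in>UNIV - {r}. Wr V W s). L0 t = mscale W (of_real r) t}"
      unfolding U_def
      using cr by (intro W.hom_proj[OF L0_add L0_scale]) (auto simp: inj_def Wr_def)
    moreover have "{t\<in>(\<Union>s\<in>UNIV - {r}. Wr V W s). L0 t = mscale W (of_real r) t} \<subseteq> {0}"
      using Wr_inter by (auto simp: Wr_def[symmetric]) (metis Wr_iff)
    ultimately have "c \<in> W.span {0}" using W.span_mono by blast
    then have "c = 0" by (simp add: W.span_singleton)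
    with r(2) show False by (simp add: c_def)
  qed
  obtain B0 where B0: "B0 \<subseteq> U" "W.independent B0" "U \<subseteq> W.span B0"
    using W.maximal_independent_subset[of U] by blast
  have spB0: "W.span B0 \<subseteq> U" using B0(1) by (simp add: U_def W.span_minimal)
  have cB0: "c \<notin> W.span B0" using cU spB0 by blast
  have indB: "W.independent (insert c B0)" using W.independent_insertI[OF cB0 B0(2)] .
  interpret P: vector_space_pair "mscale W" "(*) :: complex \<Rightarrow> complex \<Rightarrow> complex"
    using vsW vs_complex by (simp add: vector_space_pair_def)
  define phi where "phi = P.construct (insert c B0) (\<lambda>b. if b = c then 1 else 0)"
  have lin: "Vector_Spaces.linear (mscale W) (*) phi" unfolding phi_def by (rule P.linear_construct[OF indB])
  have phiB: "phi b = (if b = c then 1 else 0)" if "b \<in> insert c B0" for b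
    unfolding phi_def using P.construct_basis[OF indB that] .
  have phi_add: "phi (x + y) = phi x + phi y" for x y using lin unfolding Vector_Spaces.linear_iff by blast
  have phi_scale: "phi (mscale W a x) = a * phi x" for a x using lin unfolding Vector_Spaces.linear_iff by blast
  have phiU: "phi x = 0" if "x \<in> U" for x
  proof -
    have "x \<in> W.span B0" using that B0(3) by blast
    moreover have "phi b = 0" if "b \<in> B0" for b using phiB[of b] that cB0 W.span_base[OF that] by auto
    ultimately show ?thesis using P.linear_eq_0_on_span[OF lin] by blast
  qed
  have "phi \<in> contra V W"
  proof -
    have "\<forall>s. s \<notin> {r} \<longrightarrow> (\<forall>w\<in>Wr V W s. phi w = 0)"
      using phiU unfolding U_def by (auto intro!: W.span_base)
    then show ?thesis unfolding contra_def using phi_add phi_scale by blast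
  qed
  then have "phi Y = 0" using all by blast
  moreover have "phi Y = 1"
  proof -
    have addphi: "additive phi" using phi_add by (simp add: additive_def)
    have "phi Y = (\<Sum>s\<in>S. phi (comp s))" using S(3) additive.sum[OF addphi] by simp
    also have "\<dots> = phi (comp r)"
    proof (rule sum.remove[OF S(1) r(1), THEN trans])
      have "\<forall>s\<in>S - {r}. phi (comp s) = 0"
        using phiU S(2) unfolding U_def by (auto intro!: W.span_base)
      then show "phi (comp r) + sum (\<lambda>s. phi (comp s)) (S - {r}) = phi (comp r)" by simp
    qed
    also have "\<dots> = 1" using phiB[of c] by (simp add: c_def)
    finally show ?thesis .
  qed
  ultimately show False by simp
qed

abbreviation Gen where "Gen r \<equiv> {mY W u (-1) x | u x k. k > 0 \<and> u \<in> Vn V k \<and> x \<in> Wr V W (r - of_int k)}"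

lemma C1_span:
  assumes cof: "C1_cofinite V W"
  obtains HH where "finite HH" "\<forall>p\<in>HH. fst p \<in> Wr V W (snd p)"
    "\<And>w r. w \<in> Wr V W r \<Longrightarrow> w \<in> W.span ({h\<in>fst`HH. h \<in> Wr V W r} \<union> Gen r)"
proof -
  have "\<forall>w. \<exists>S comp. finite S \<and> (\<forall>r\<in>S. comp r \<in> Wr V W r) \<and> w = (\<Sum>r\<in>S. comp r)"
    using grading by blast
  then obtain Sf cf where Sf: "\<And>w. finite (Sf w)" "\<And>w r. r \<in> Sf w \<Longrightarrow> cf w r \<in> Wr V W r"
      "\<And>w. w = (\<Sum>r\<in>Sf w. cf w r)"
    by metis
  obtain F where F: "finite F" "W.span (F \<union> C1 V W) = UNIV" using cof by (auto simp: C1_cofinite_def)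
  define HH where "HH = (\<Union>w\<in>F. (\<lambda>r. (cf w r, r)) ` Sf w)"
  have finHH: "finite HH" using F(1) Sf(1) by (simp add: HH_def)
  have HHw: "\<forall>p\<in>HH. fst p \<in> Wr V W (snd p)" using Sf(2) by (auto simp: HH_def)
  define G where "G = {mY W u (-1) x | u x k \<rho>. k > 0 \<and> u \<in> Vn V k \<and> x \<in> Wr V W \<rho>}"
  define T where "T = fst`HH \<union> G"
  have FT: "F \<subseteq> W.span T"
  proof
    fix w assume w: "w \<in> F"
    have "(\<Sum>r\<in>Sf w. cf w r) \<in> W.span T"
    proof (rule W.span_sum)
      fix r assume "r \<in> Sf w"
      then have "cf w r \<in> fst`HH" using w unfolding HH_def by force
      then show "cf w r \<in> W.span T" unfolding T_def by (intro W.span_base) blast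
    qed
    then show "w \<in> W.span T" using Sf(3)[of w] by simp
  qed
  have genT: "mY W u (-1) x \<in> W.span T" if u: "u \<in> Vplus V" for u x
  proof -
    have "u \<in> V.span (\<Union>n\<in>{0<..}. Vn V n)" using u by (simp add: Vplus_def)
    then have "\<forall>x. mY W u (-1) x \<in> W.span T"
    proof (induction rule: V.span_induct)
      case base
      show "V.subspace {u. \<forall>x. mY W u (-1) x \<in> W.span T}"
        unfolding V.subspace_def
        using is_linear_zero[OF linU] is_linear_add[OF linU] is_linear_scale[OF linU]
        by (auto intro: W.span_add W.span_scale W.span_zero)
    next
      case step
      fix u assume "u \<in> (\<Union>n\<in>{0<..}. Vn V n)"
      then obtain k where k: "k > 0" "u \<in> Vn V k" by auto
      show "\<forall>x. mY W u (-1) x \<in> W.span T"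
      proof
        fix x
        have "mY W u (-1) x = (\<Sum>r\<in>Sf x. mY W u (-1) (cf x r))"
          using Sf(3)[of x] is_linear_sum[OF linY] by metis
        also have "\<dots> \<in> W.span T"
        proof (rule W.span_sum)
          fix r assume "r \<in> Sf x"
          then have "mY W u (-1) (cf x r) \<in> G" using k Sf(2) unfolding G_def by blast
          then show "mY W u (-1) (cf x r) \<in> W.span T" unfolding T_def by (intro W.span_base) blast
        qed
        finally show "mY W u (-1) x \<in> W.span T" .
      qed
    qed
    then show ?thesis by blast
  qed
  have C1T: "C1 V W \<subseteq> W.span T"
    unfolding C1_def by (rule W.span_minimal) (use genT in auto)
  have UT: "UNIV \<subseteq> W.span T"
  proof -
    have "F \<union> C1 V W \<subseteq> W.span T" using FT C1T by blast
    then have "W.span (F \<union> C1 V W) \<subseteq> W.span T" by (rule W.span_minimal) simp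
    then show ?thesis using F(2) by simp
  qed
  have main: "w \<in> W.span ({h\<in>fst`HH. h \<in> Wr V W r} \<union> Gen r)" if w: "w \<in> Wr V W r" for w r
  proof -
    have Thom: "\<forall>t\<in>T. \<exists>r. L0 t = mscale W (of_real r) t"
    proof
      fix t assume "t \<in> T"
      then consider "t \<in> fst`HH" | "t \<in> G" unfolding T_def by blast
      then show "\<exists>r. L0 t = mscale W (of_real r) t"
      proof cases
        case 1 then show ?thesis using HHw by (auto simp: Wr_def)
      next
        case 2
        then obtain u x k \<rho> where "t = mY W u (-1) x" "u \<in> Vn V k" "x \<in> Wr V W \<rho>" unfolding G_def by blast
        then have "t \<in> Wr V W (\<rho> + of_int k - of_int (-1) - 1)" using shift by blast
        then show ?thesis unfolding Wr_def by blast
      qed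
    qed
    have "w \<in> W.span {t\<in>T. L0 t = mscale W (of_real r) t}"
      using w UT by (intro W.hom_proj[OF L0_add L0_scale _ Thom]) (auto simp: inj_def Wr_def)
    moreover have "{t\<in>T. L0 t = mscale W (of_real r) t} \<subseteq> W.span ({h\<in>fst`HH. h \<in> Wr V W r} \<union> Gen r)"
    proof
      fix t assume t: "t \<in> {t\<in>T. L0 t = mscale W (of_real r) t}"
      then have tr: "t \<in> Wr V W r" by (simp add: Wr_def)
      from t consider "t \<in> fst`HH" | "t \<in> G" unfolding T_def by blast
      then show "t \<in> W.span ({h\<in>fst`HH. h \<in> Wr V W r} \<union> Gen r)"
      proof cases
        case 1 then show ?thesis using tr by (intro W.span_base) blast
      next
        case 2
        then obtain u x k \<rho> where tt: "t = mY W u (-1) x" "k > 0" "u \<in> Vn V k" "x \<in> Wr V W \<rho>" unfolding G_def by blast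
        then have tw: "t \<in> Wr V W (\<rho> + of_int k)" using shift[of u k x \<rho> "-1"] by simp
        show ?thesis
        proof (cases "\<rho> + of_int k = r")
          case True
          then have "r - of_int k = \<rho>" by simp
          then have "x \<in> Wr V W (r - of_int k)" using tt by simp
          then have "t \<in> Gen r" using tt by blast
          then show ?thesis by (intro W.span_base) blast
        next
          case False
          then have "t = 0" using Wr_inter[OF tw tr] by simp
          then show ?thesis by (simp add: W.span_zero)
        qed
      qed
    qed
    then have "W.span {t\<in>T. L0 t = mscale W (of_real r) t} \<subseteq> W.span ({h\<in>fst`HH. h \<in> Wr V W r} \<union> Gen r)"
      by (rule W.span_minimal) simp
    ultimately show ?thesis by blast
  qed
  show ?thesis using that finHH HHw main by blast
qed

end

locale tri = M1: drgm V W1 + M2: drgm V W2 + M3: drgm V W3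
  for V :: "('v::ab_group_add) voa" and W1 :: "('v, 'w1::ab_group_add) vmod"
  and W2 :: "('v, 'w2::ab_group_add) vmod" and W3 :: "('v, 'w3::ab_group_add) vmod"

locale intw = tri V W1 W2 W3
  for V :: "('v::ab_group_add) voa" and W1 :: "('v, 'w1::ab_group_add) vmod"
  and W2 :: "('v, 'w2::ab_group_add) vmod" and W3 :: "('v, 'w3::ab_group_add) vmod" +
  fixes I :: "'w1 \<Rightarrow> complex \<Rightarrow> 'w2 \<Rightarrow> 'w3"
  assumes intw: "is_intertwining V W1 W2 W3 I"
begin

lemma linI2: "is_linear (mscale W2) (mscale W3) (I w1 n)" using intw by (simp add: is_intertwining_def)
lemma linI1: "is_linear (mscale W1) (mscale W3) (\<lambda>w1. I w1 n w2)" using intw by (simp add: is_intertwining_def)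
lemma LmI: "I (mY W1 (omega V) 0 w1) n w2 = mscale W3 (- n) (I w1 (n - 1) w2)"
  using intw by (simp add: is_intertwining_def)
lemma jacI: "\<exists>N. \<forall>M\<ge>N.
        (\<Sum>i=0..M. mscale W3 (of_int p gchoose i)
            (I (mY W1 v (q + int i) w1) (of_int p + a - of_nat i) w2))
      = (\<Sum>i=0..M. mscale W3 ((-1) ^ i * (of_int q gchoose i))
           (mY W3 v (p + q - int i) (I w1 (a + of_nat i) w2)
            - mscale W3 ((-1) powi q) (I w1 (of_int q + a - of_nat i) (mY W2 v (p + int i) w2))))"
  using intw unfolding is_intertwining_def by blast

lemma out_weight: assumes w1: "w1 \<in> Wr V W1 r1" and w2: "w2 \<in> Wr V W2 r2"
  shows "M3.L0 (I w1 a w2) = mscale W3 (of_real r1 + of_real r2 - a - 1) (I w1 a w2)"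
proof -
  obtain N where N: "\<forall>M\<ge>N.
        (\<Sum>i=0..M. mscale W3 (of_int 1 gchoose i)
            (I (mY W1 (omega V) (0 + int i) w1) (of_int 1 + a - of_nat i) w2))
      = (\<Sum>i=0..M. mscale W3 ((-1) ^ i * (of_int 0 gchoose i))
           (mY W3 (omega V) (1 + 0 - int i) (I w1 (a + of_nat i) w2)
            - mscale W3 ((-1) powi 0) (I w1 (of_int 0 + a - of_nat i) (mY W2 (omega V) (1 + int i) w2))))"
    using jacI[of 1 "omega V" 0 w1 a w2] by blast
  define M where "M = max N 1"
  have M: "M \<ge> N" "1 \<le> M" by (auto simp: M_def)
  have lhs: "(\<Sum>i=0..M. mscale W3 (of_int 1 gchoose i)
            (I (mY W1 (omega V) (0 + int i) w1) (of_int 1 + a - of_nat i) w2))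
     = I (mY W1 (omega V) 0 w1) (1 + a) w2 + I (mY W1 (omega V) 1 w1) a w2"
    by (subst sum_01_only[OF M(2)]) (auto simp: gch1)
  have rhs: "(\<Sum>i=0..M. mscale W3 ((-1) ^ i * (of_int 0 gchoose i))
           (mY W3 (omega V) (1 + 0 - int i) (I w1 (a + of_nat i) w2)
            - mscale W3 ((-1) powi 0) (I w1 (of_int 0 + a - of_nat i) (mY W2 (omega V) (1 + int i) w2))))
      = M3.L0 (I w1 a w2) - I w1 a (M2.L0 w2)"
    by (subst sum_0_only) (auto simp: gch0)
  have e1: "I (mY W1 (omega V) 0 w1) (1 + a) w2 = mscale W3 (- (1 + a)) (I w1 a w2)"
    using LmI[of w1 "1 + a" w2] by simp
  have e2: "I (mY W1 (omega V) 1 w1) a w2 = mscale W3 (of_real r1) (I w1 a w2)"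
    using w1 is_linear_scale[OF linI1] by (simp add: Wr_def)
  have e3: "I w1 a (M2.L0 w2) = mscale W3 (of_real r2) (I w1 a w2)"
    using w2 is_linear_scale[OF linI2] by (simp add: Wr_def)
  have eq: "I (mY W1 (omega V) 0 w1) (1 + a) w2 + I (mY W1 (omega V) 1 w1) a w2 = M3.L0 (I w1 a w2) - I w1 a (M2.L0 w2)"
    using N[rule_format, OF M(1)] unfolding lhs rhs .
  have "M3.L0 (I w1 a w2) = mscale W3 (- (1 + a)) (I w1 a w2) + mscale W3 (of_real r1) (I w1 a w2)
        + mscale W3 (of_real r2) (I w1 a w2)"
    using eq_diff_eq[THEN iffD1, OF eq, symmetric] unfolding e1 e2 e3 .
  also have "\<dots> = mscale W3 (of_real r1 + of_real r2 - a - 1) (I w1 a w2)"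
    by (simp only: M3.W.scale_left_distrib[symmetric]) (simp add: algebra_simps)
  finally show ?thesis .
qed

lemma commI: "\<exists>N. \<forall>M\<ge>N.
        (\<Sum>i=0..M. mscale W3 (of_int p gchoose i) (I (mY W1 v (int i) w1) (of_int p + a - of_nat i) w2))
      = mY W3 v p (I w1 a w2) - I w1 a (mY W2 v p w2)"
proof -
  obtain N where N: "\<forall>M\<ge>N.
        (\<Sum>i=0..M. mscale W3 (of_int p gchoose i)
            (I (mY W1 v (0 + int i) w1) (of_int p + a - of_nat i) w2))
      = (\<Sum>i=0..M. mscale W3 ((-1) ^ i * (of_int 0 gchoose i))
           (mY W3 v (p + 0 - int i) (I w1 (a + of_nat i) w2)
            - mscale W3 ((-1) powi 0) (I w1 (of_int 0 + a - of_nat i) (mY W2 v (p + int i) w2))))"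
    using jacI[of p v 0 w1 a w2] by blast
  have rhs: "(\<Sum>i=0..M. mscale W3 ((-1) ^ i * (of_int 0 gchoose i))
           (mY W3 v (p + 0 - int i) (I w1 (a + of_nat i) w2)
            - mscale W3 ((-1) powi 0) (I w1 (of_int 0 + a - of_nat i) (mY W2 v (p + int i) w2))))
      = mY W3 v p (I w1 a w2) - I w1 a (mY W2 v p w2)" for M
    by (subst sum_0_only) (auto simp: gch0)
  have X: "\<forall>M\<ge>N.
        (\<Sum>i=0..M. mscale W3 (of_int p gchoose i) (I (mY W1 v (int i) w1) (of_int p + a - of_nat i) w2))
      = mY W3 v p (I w1 a w2) - I w1 a (mY W2 v p w2)" using N unfolding rhs by simp
  show ?thesis using X by blast
qed

lemma assocI: "\<exists>N. \<forall>M\<ge>N.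
        I (mY W1 v (-1) w1) a w2
      = (\<Sum>i=0..M. mscale W3 ((-1) ^ i * (of_int (-1) gchoose i))
           (mY W3 v (-1 - int i) (I w1 (a + of_nat i) w2)
            - mscale W3 ((-1) powi (-1)) (I w1 (of_int (-1) + a - of_nat i) (mY W2 v (int i) w2))))"
proof -
  obtain N where N: "\<forall>M\<ge>N.
        (\<Sum>i=0..M. mscale W3 (of_int 0 gchoose i)
            (I (mY W1 v (-1 + int i) w1) (of_int 0 + a - of_nat i) w2))
      = (\<Sum>i=0..M. mscale W3 ((-1) ^ i * (of_int (-1) gchoose i))
           (mY W3 v (0 + (-1) - int i) (I w1 (a + of_nat i) w2)
            - mscale W3 ((-1) powi (-1)) (I w1 (of_int (-1) + a - of_nat i) (mY W2 v (0 + int i) w2))))"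
    using jacI[of 0 v "-1" w1 a w2] by blast
  have lhs: "(\<Sum>i=0..M. mscale W3 (of_int 0 gchoose i)
            (I (mY W1 v (-1 + int i) w1) (of_int 0 + a - of_nat i) w2)) = I (mY W1 v (-1) w1) a w2" for M
    by (subst sum_0_only) (auto simp: gch0)
  have X: "\<forall>M\<ge>N.
        I (mY W1 v (-1) w1) a w2
      = (\<Sum>i=0..M. mscale W3 ((-1) ^ i * (of_int (-1) gchoose i))
           (mY W3 v (-1 - int i) (I w1 (a + of_nat i) w2)
            - mscale W3 ((-1) powi (-1)) (I w1 (of_int (-1) + a - of_nat i) (mY W2 v (int i) w2))))"
    using N unfolding lhs add_0_left .
  show ?thesis using X by blast
qed

lemma contra_sum_zero:
  assumes g: "g \<in> contra V W3" and z: "\<And>i. i \<in> A \<Longrightarrow> g (X i) = 0" "\<And>i. i \<in> A \<Longrightarrow> g (Y i) = 0"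
  shows "g (\<Sum>i\<in>A. mscale W3 (c i) (X i - mscale W3 d (Y i))) = 0"
  using z by (simp add: M3.contra_sum[OF g] M3.contra_scale[OF g] M3.contra_diff[OF g])

definition Q :: "real \<Rightarrow> bool" where
  "Q c \<longleftrightarrow> (\<forall>r1 r2 w1 w2 a g. w1 \<in> Wr V W1 r1 \<longrightarrow> w2 \<in> Wr V W2 r2 \<longrightarrow> g \<in> contra V W3 \<longrightarrow>
      2 * r1 + 2 * r2 - Re a - 1 < c \<longrightarrow> g (I w1 a w2) = 0)"

lemma QD: "Q c \<Longrightarrow> w1 \<in> Wr V W1 r1 \<Longrightarrow> w2 \<in> Wr V W2 r2 \<Longrightarrow> g \<in> contra V W3 \<Longrightarrow>
      2 * r1 + 2 * r2 - Re a - 1 < c \<Longrightarrow> g (I w1 a w2) = 0"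
  unfolding Q_def by blast

lemma stepA:
  assumes Qc: "Q c" and k: "k > 0" "u \<in> Vn V k" and x: "x \<in> Wr V W1 (r1 - of_int k)"
    and w2: "w2 \<in> Wr V W2 r2" and g: "g \<in> contra V W3" and mu: "2 * r1 + 2 * r2 - Re a - 1 < c + 1"
  shows "g (I (mY W1 u (-1) x) a w2) = 0"
proof -
  obtain N where N: "\<forall>M\<ge>N.
        I (mY W1 u (-1) x) a w2
      = (\<Sum>i=0..M. mscale W3 ((-1) ^ i * (of_int (-1) gchoose i))
           (mY W3 u (-1 - int i) (I x (a + of_nat i) w2)
            - mscale W3 ((-1) powi (-1)) (I x (of_int (-1) + a - of_nat i) (mY W2 u (int i) w2))))"
    using assocI by blast
  show ?thesis unfolding N[rule_format, OF order_refl]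
  proof (rule contra_sum_zero[OF g])
    fix i assume "i \<in> {0..N}"
    have g': "(\<lambda>w. g (mY W3 u (-1 - int i) w)) \<in> contra V W3" by (rule M3.contra_comp[OF g k(2)])
    show "g (mY W3 u (-1 - int i) (I x (a + of_nat i) w2)) = 0"
      using QD[OF Qc x w2 g', of "a + of_nat i"] mu k(1) by simp
    have "mY W2 u (int i) w2 \<in> Wr V W2 (r2 + of_int k - of_int (int i) - 1)" by (rule M2.shift[OF k(2) w2])
    then show "g (I x (of_int (-1) + a - of_nat i) (mY W2 u (int i) w2)) = 0"
      using QD[OF Qc x _ g, of "mY W2 u (int i) w2" "r2 + of_int k - of_int (int i) - 1" "of_int (-1) + a - of_nat i"] mu
      by simp
  qed
qed

lemma stepB:
  assumes Qc: "Q c" and k: "k > 0" "u \<in> Vn V k" and x: "x \<in> Wr V W2 (r2 - of_int k)"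
    and w1: "w1 \<in> Wr V W1 r1" and g: "g \<in> contra V W3" and mu: "2 * r1 + 2 * r2 - Re a - 1 < c + 1"
  shows "g (I w1 a (mY W2 u (-1) x)) = 0"
proof -
  obtain N where N: "\<forall>M\<ge>N.
        (\<Sum>i=0..M. mscale W3 (of_int (-1) gchoose i) (I (mY W1 u (int i) w1) (of_int (-1) + a - of_nat i) x))
      = mY W3 u (-1) (I w1 a x) - I w1 a (mY W2 u (-1) x)"
    using commI by blast
  have eq: "I w1 a (mY W2 u (-1) x) = mY W3 u (-1) (I w1 a x) -
     (\<Sum>i=0..N. mscale W3 (of_int (-1) gchoose i) (I (mY W1 u (int i) w1) (of_int (-1) + a - of_nat i) x))"
    using N[rule_format, OF order_refl] by (simp add: algebra_simps)
  have g': "(\<lambda>w. g (mY W3 u (-1) w)) \<in> contra V W3" by (rule M3.contra_comp[OF g k(2)])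
  have t1: "g (mY W3 u (-1) (I w1 a x)) = 0"
    using QD[OF Qc w1 x g', of a] mu k(1) by simp
  have t2: "g (I (mY W1 u (int i) w1) (of_int (-1) + a - of_nat i) x) = 0" for i
  proof -
    have "mY W1 u (int i) w1 \<in> Wr V W1 (r1 + of_int k - of_int (int i) - 1)" by (rule M1.shift[OF k(2) w1])
    then show ?thesis
      using QD[OF Qc _ x g, of "mY W1 u (int i) w1" "r1 + of_int k - of_int (int i) - 1" "of_int (-1) + a - of_nat i"] mu
      by simp
  qed
  show ?thesis unfolding eq
    using t1 t2 by (simp add: M3.contra_diff[OF g] M3.contra_sum[OF g] M3.contra_scale[OF g])
qed

lemma stepC:
  assumes Qc: "Q c" and k: "k > 0" "u \<in> Vn V k" and f: "f \<in> contra V W3"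
    and w1: "w1 \<in> Wr V W1 r1" and w2: "w2 \<in> Wr V W2 r2" and mu: "2 * r1 + 2 * r2 - Re a - 1 < c + 1"
  shows "contra_mode V W3 k u (-1) f (I w1 a w2) = 0"
proof -
  have tmz: "f (mY W3 (L1pow V j u) (2 * k - int j - (-1) - 2) (I w1 a w2)) = 0" for j
  proof -
    define v where "v = L1pow V j u"
    define p where "p = 2 * k - int j - (-1) - 2"
    have v: "v \<in> Vn V (k - int j)" unfolding v_def by (rule M1.L1pow_lower[OF k(2)])
    obtain N where N: "\<forall>M\<ge>N.
        (\<Sum>i=0..M. mscale W3 (of_int p gchoose i) (I (mY W1 v (int i) w1) (of_int p + a - of_nat i) w2))
      = mY W3 v p (I w1 a w2) - I w1 a (mY W2 v p w2)"
      using commI by blast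
    have eq: "mY W3 v p (I w1 a w2) = I w1 a (mY W2 v p w2) +
       (\<Sum>i=0..N. mscale W3 (of_int p gchoose i) (I (mY W1 v (int i) w1) (of_int p + a - of_nat i) w2))"
      using N[rule_format, OF order_refl] by (simp add: algebra_simps)
    have t1: "f (I w1 a (mY W2 v p w2)) = 0"
    proof -
      have "mY W2 v p w2 \<in> Wr V W2 (r2 + of_int (k - int j) - of_int p - 1)" by (rule M2.shift[OF v w2])
      then show ?thesis using QD[OF Qc w1 _ f, of "mY W2 v p w2" "r2 + of_int (k - int j) - of_int p - 1" a] mu k(1)
        by (simp add: p_def)
    qed
    have t2: "f (I (mY W1 v (int i) w1) (of_int p + a - of_nat i) w2) = 0" for i
    proof -
      have "mY W1 v (int i) w1 \<in> Wr V W1 (r1 + of_int (k - int j) - of_int (int i) - 1)" by (rule M1.shift[OF v w1])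
      then show ?thesis
        using QD[OF Qc _ w2 f, of "mY W1 v (int i) w1" "r1 + of_int (k - int j) - of_int (int i) - 1" "of_int p + a - of_nat i"] mu
        by (simp add: p_def)
    qed
    show ?thesis unfolding v_def[symmetric] p_def[symmetric] eq
      using t1 t2 by (simp add: M3.contra_add[OF f] M3.contra_sum[OF f] M3.contra_scale[OF f])
  qed
  show ?thesis unfolding contra_mode_def using tmz by simp
qed

lemma nonzero_bound:
  assumes b1: "\<forall>r<b1. \<forall>w\<in>Wr V W1 r. w = 0" and b2: "\<forall>r<b2. \<forall>w\<in>Wr V W2 r. w = 0"
    and b3: "\<forall>r<b3. \<forall>w\<in>Wr V W3 r. w = 0"
    and w1: "w1 \<in> Wr V W1 r1" and w2: "w2 \<in> Wr V W2 r2" and Y: "I w1 a w2 \<noteq> 0"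
  shows "b1 + b2 + b3 \<le> 2 * r1 + 2 * r2 - Re a - 1"
proof -
  have "w1 \<noteq> 0" using Y is_linear_zero[OF linI1] by metis
  then have r1: "b1 \<le> r1" using b1 w1 by (meson not_less)
  have "w2 \<noteq> 0" using Y is_linear_zero[OF linI2] by metis
  then have r2: "b2 \<le> r2" using b2 w2 by (meson not_less)
  have L: "M3.L0 (I w1 a w2) = mscale W3 (of_real r1 + of_real r2 - a - 1) (I w1 a w2)"
    by (rule out_weight[OF w1 w2])
  obtain l where l: "of_real r1 + of_real r2 - a - 1 = of_real l" using M3.real_eig[OF L Y] by blast
  have "I w1 a w2 \<in> Wr V W3 l" using L l by (simp add: Wr_def)
  then have "b3 \<le> l" using b3 Y by (meson not_less)
  moreover have "l = r1 + r2 - Re a - 1" using arg_cong[OF l, of Re] by simp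
  ultimately show ?thesis using r1 r2 by simp
qed

lemma fun_span_zero: "g \<in> fun_span S \<Longrightarrow> (\<And>h. h \<in> S \<Longrightarrow> h Y = 0) \<Longrightarrow> g Y = (0::complex)"
  unfolding fun_span_def by (auto intro!: sum.neutral)

lemma claim:
  assumes span1: "\<And>w r. w \<in> Wr V W1 r \<Longrightarrow> w \<in> M1.W.span ({h\<in>fst`HH1. h \<in> Wr V W1 r} \<union> M1.Gen r)"
    and span2: "\<And>w r. w \<in> Wr V W2 r \<Longrightarrow> w \<in> M2.W.span ({h\<in>fst`HH2. h \<in> Wr V W2 r} \<union> M2.Gen r)"
    and F3: "contra V W3 \<subseteq> fun_span (F3 \<union> C1_contra V W3)"
    and base: "\<And>h1 h2 f a. h1 \<in> fst`HH1 \<Longrightarrow> h2 \<in> fst`HH2 \<Longrightarrow> f \<in> F3 \<Longrightarrow> f (I h1 a h2) = 0"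
    and b1: "\<forall>r<b1. \<forall>w\<in>Wr V W1 r. w = 0" and b2: "\<forall>r<b2. \<forall>w\<in>Wr V W2 r. w = 0"
    and b3: "\<forall>r<b3. \<forall>w\<in>Wr V W3 r. w = 0"
  shows "Q (b1 + b2 + b3 + real n)"
proof (induction n)
  case 0
  show ?case unfolding Q_def
  proof (intro allI impI)
    fix r1 r2 w1 w2 a g assume h: "w1 \<in> Wr V W1 r1" "w2 \<in> Wr V W2 r2" "g \<in> contra V W3"
      "2 * r1 + 2 * r2 - Re a - 1 < b1 + b2 + b3 + real 0"
    have "I w1 a w2 = 0" using nonzero_bound[OF b1 b2 b3 h(1,2)] h(4) by force
    then show "g (I w1 a w2) = 0" using M3.contra_zero[OF h(3)] by simp
  qed
next
  case (Suc n)
  define c where "c = b1 + b2 + b3 + real n"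
  have Qc: "Q c" using Suc.IH by (simp add: c_def)
  show ?case unfolding Q_def
  proof (intro allI impI)
    fix r1 r2 w1 w2 a g assume w1: "w1 \<in> Wr V W1 r1" and w2: "w2 \<in> Wr V W2 r2" and g: "g \<in> contra V W3"
      and mu0: "2 * r1 + 2 * r2 - Re a - 1 < b1 + b2 + b3 + real (Suc n)"
    have mu: "2 * r1 + 2 * r2 - Re a - 1 < c + 1" using mu0 by (simp add: c_def)
    have sub1: "M1.W.subspace {x. \<forall>y. g (I x a y) = 0}"
      unfolding M1.W.subspace_def
      using is_linear_zero[OF linI1] is_linear_add[OF linI1] is_linear_scale[OF linI1]
        M3.contra_zero[OF g] M3.contra_add[OF g] M3.contra_scale[OF g]
      by simp
    have "w1 \<in> M1.W.span ({h\<in>fst`HH1. h \<in> Wr V W1 r1} \<union> M1.Gen r1)" by (rule span1[OF w1])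
    then have "\<forall>y. y \<in> Wr V W2 r2 \<longrightarrow> g (I w1 a y) = 0"
    proof (induction rule: M1.W.span_induct)
      case base
      show ?case
        unfolding M1.W.subspace_def
        using is_linear_zero[OF linI1] is_linear_add[OF linI1] is_linear_scale[OF linI1]
          M3.contra_zero[OF g] M3.contra_add[OF g] M3.contra_scale[OF g]
        by simp
    next
      case (step t)
      show ?case
      proof (intro allI impI)
        fix y assume y: "y \<in> Wr V W2 r2"
        from step consider "t \<in> {h\<in>fst`HH1. h \<in> Wr V W1 r1}" | "t \<in> M1.Gen r1" by blast
        then show "g (I t a y) = 0"
        proof cases
          case 2
          then obtain u x k where t: "t = mY W1 u (-1) x" "k > 0" "u \<in> Vn V k" "x \<in> Wr V W1 (r1 - of_int k)" by blast
          show ?thesis unfolding t(1) by (rule stepA[OF Qc t(2,3,4) y g mu])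
        next
          case 1
          then have tH: "t \<in> fst`HH1" and tr: "t \<in> Wr V W1 r1" by auto
          have "y \<in> M2.W.span ({h\<in>fst`HH2. h \<in> Wr V W2 r2} \<union> M2.Gen r2)" by (rule span2[OF y])
          then show "g (I t a y) = 0"
          proof (induction rule: M2.W.span_induct)
            case base
            show ?case
              unfolding M2.W.subspace_def
              using is_linear_zero[OF linI2] is_linear_add[OF linI2] is_linear_scale[OF linI2]
                M3.contra_zero[OF g] M3.contra_add[OF g] M3.contra_scale[OF g]
              by simp
          next
            case (step s)
            from step consider "s \<in> {h\<in>fst`HH2. h \<in> Wr V W2 r2}" | "s \<in> M2.Gen r2" by blast
            then show ?case
            proof cases
              case 2
              then obtain u x k where s: "s = mY W2 u (-1) x" "k > 0" "u \<in> Vn V k" "x \<in> Wr V W2 (r2 - of_int k)" by blast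
              show ?thesis unfolding s(1) by (rule stepB[OF Qc s(2,3,4) tr g mu])
            next
              case 1
              then have sH: "s \<in> fst`HH2" and sr: "s \<in> Wr V W2 r2" by auto
              have "g \<in> fun_span (F3 \<union> C1_contra V W3)" using F3 g by blast
              then show ?thesis
              proof (rule fun_span_zero)
                fix h assume "h \<in> F3 \<union> C1_contra V W3"
                then consider "h \<in> F3" | "h \<in> C1_contra V W3" by blast
                then show "h (I t a s) = 0"
                proof cases
                  case 1 then show ?thesis using base[OF tH sH] by blast
                next
                  case 2
                  then show ?thesis unfolding C1_contra_def
                  proof (rule fun_span_zero)
                    fix h' assume "h' \<in> {contra_mode V W3 k u (-1) f | k u f. k > 0 \<and> u \<in> Vn V k \<and> f \<in> contra V W3}"
                    then obtain k u f where h': "h' = contra_mode V W3 k u (-1) f" "k > 0" "u \<in> Vn V k" "f \<in> contra V W3"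
                      by blast
                    show "h' (I t a s) = 0" unfolding h'(1) by (rule stepC[OF Qc h'(2,3,4) tr sr mu])
                  qed
                qed
              qed
            qed
          qed
        qed
      qed
    qed
    then show "g (I w1 a w2) = 0" using w2 by blast
  qed
qed

end

lemma sum_fun_apply: "(\<Sum>k\<in>A. F k) x = (\<Sum>k\<in>A. F k x)"
  by (induction A rule: infinite_finite_induct) auto

context tri begin

lemma intw_zero: "is_intertwining V W1 W2 W3 (\<lambda>w1 n w2. 0)"
  unfolding is_intertwining_def is_linear_def
  by (simp add: is_linear_zero[OF M3.linY])

lemma intw_add:
  assumes I: "is_intertwining V W1 W2 W3 I" and J: "is_intertwining V W1 W2 W3 J"
  shows "is_intertwining V W1 W2 W3 (\<lambda>w1 n w2. I w1 n w2 + J w1 n w2)"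
proof -
  note Id = I[unfolded is_intertwining_def] and Jd = J[unfolded is_intertwining_def]
  have a: "\<forall>w1 n. is_linear (mscale W2) (mscale W3) (\<lambda>w2. I w1 n w2 + J w1 n w2)"
    using Id Jd unfolding is_linear_def by (simp add: M3.W.scale_right_distrib algebra_simps)
  have b: "\<forall>w2 n. is_linear (mscale W1) (mscale W3) (\<lambda>w1. I w1 n w2 + J w1 n w2)"
    using Id Jd unfolding is_linear_def by (simp add: M3.W.scale_right_distrib algebra_simps)
  have c: "\<forall>w1 w2 n. \<exists>N. \<forall>m\<ge>N. I w1 (n + of_nat m) w2 + J w1 (n + of_nat m) w2 = 0"
  proof (intro allI)
    fix w1 w2 n
    obtain N1 where N1: "\<forall>m\<ge>N1. I w1 (n + of_nat m) w2 = 0" using Id by blast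
    obtain N2 where N2: "\<forall>m\<ge>N2. J w1 (n + of_nat m) w2 = 0" using Jd by blast
    show "\<exists>N. \<forall>m\<ge>N. I w1 (n + of_nat m) w2 + J w1 (n + of_nat m) w2 = 0"
      using N1 N2 by (intro exI[of _ "max N1 N2"]) simp
  qed
  have d: "\<forall>w1 n w2. I (mY W1 (omega V) 0 w1) n w2 + J (mY W1 (omega V) 0 w1) n w2
      = mscale W3 (- n) (I w1 (n - 1) w2 + J w1 (n - 1) w2)"
    using Id Jd by (simp add: M3.W.scale_right_distrib)
  have e: "\<forall>v w1 w2 (p::int) (q::int) (a::complex). \<exists>N. \<forall>M\<ge>N.
        (\<Sum>i=0..M. mscale W3 (of_int p gchoose i)
            (I (mY W1 v (q + int i) w1) (of_int p + a - of_nat i) w2 + J (mY W1 v (q + int i) w1) (of_int p + a - of_nat i) w2))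
      = (\<Sum>i=0..M. mscale W3 ((-1) ^ i * (of_int q gchoose i))
           (mY W3 v (p + q - int i) (I w1 (a + of_nat i) w2 + J w1 (a + of_nat i) w2)
            - mscale W3 ((-1) powi q) (I w1 (of_int q + a - of_nat i) (mY W2 v (p + int i) w2) + J w1 (of_int q + a - of_nat i) (mY W2 v (p + int i) w2))))"
  proof (intro allI)
    fix v w1 w2 p q a
    obtain N1 where N1: "\<forall>M\<ge>N1.
        (\<Sum>i=0..M. mscale W3 (of_int p gchoose i)
            (I (mY W1 v (q + int i) w1) (of_int p + a - of_nat i) w2))
      = (\<Sum>i=0..M. mscale W3 ((-1) ^ i * (of_int q gchoose i))
           (mY W3 v (p + q - int i) (I w1 (a + of_nat i) w2)
            - mscale W3 ((-1) powi q) (I w1 (of_int q + a - of_nat i) (mY W2 v (p + int i) w2))))"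
      using Id by blast
    obtain N2 where N2: "\<forall>M\<ge>N2.
        (\<Sum>i=0..M. mscale W3 (of_int p gchoose i)
            (J (mY W1 v (q + int i) w1) (of_int p + a - of_nat i) w2))
      = (\<Sum>i=0..M. mscale W3 ((-1) ^ i * (of_int q gchoose i))
           (mY W3 v (p + q - int i) (J w1 (a + of_nat i) w2)
            - mscale W3 ((-1) powi q) (J w1 (of_int q + a - of_nat i) (mY W2 v (p + int i) w2))))"
      using Jd by blast
    show "\<exists>N. \<forall>M\<ge>N.
        (\<Sum>i=0..M. mscale W3 (of_int p gchoose i)
            (I (mY W1 v (q + int i) w1) (of_int p + a - of_nat i) w2 + J (mY W1 v (q + int i) w1) (of_int p + a - of_nat i) w2))
      = (\<Sum>i=0..M. mscale W3 ((-1) ^ i * (of_int q gchoose i))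
           (mY W3 v (p + q - int i) (I w1 (a + of_nat i) w2 + J w1 (a + of_nat i) w2)
            - mscale W3 ((-1) powi q) (I w1 (of_int q + a - of_nat i) (mY W2 v (p + int i) w2) + J w1 (of_int q + a - of_nat i) (mY W2 v (p + int i) w2))))"
    proof (intro exI[of _ "max N1 N2"] allI impI)
      fix M assume M: "max N1 N2 \<le> M"
      show "(\<Sum>i=0..M. mscale W3 (of_int p gchoose i)
            (I (mY W1 v (q + int i) w1) (of_int p + a - of_nat i) w2 + J (mY W1 v (q + int i) w1) (of_int p + a - of_nat i) w2))
      = (\<Sum>i=0..M. mscale W3 ((-1) ^ i * (of_int q gchoose i))
           (mY W3 v (p + q - int i) (I w1 (a + of_nat i) w2 + J w1 (a + of_nat i) w2)
            - mscale W3 ((-1) powi q) (I w1 (of_int q + a - of_nat i) (mY W2 v (p + int i) w2) + J w1 (of_int q + a - of_nat i) (mY W2 v (p + int i) w2))))"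
        using N1[rule_format, of M] N2[rule_format, of M] M
        by (simp add: M3.W.scale_right_distrib M3.W.scale_right_diff_distrib is_linear_add[OF M3.linY] sum.distrib sum_subtractf algebra_simps)
    qed
  qed
  show ?thesis unfolding is_intertwining_def using a b c d e by blast
qed

lemma intw_scale:
  assumes I: "is_intertwining V W1 W2 W3 I"
  shows "is_intertwining V W1 W2 W3 (\<lambda>w1 n w2. mscale W3 c (I w1 n w2))"
proof -
  note Id = I[unfolded is_intertwining_def]
  have a: "\<forall>w1 n. is_linear (mscale W2) (mscale W3) (\<lambda>w2. mscale W3 c (I w1 n w2))"
    using Id unfolding is_linear_def by (simp add: M3.W.scale_right_distrib M3.W.scale_left_commute[of c])
  have b: "\<forall>w2 n. is_linear (mscale W1) (mscale W3) (\<lambda>w1. mscale W3 c (I w1 n w2))"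
    using Id unfolding is_linear_def by (simp add: M3.W.scale_right_distrib M3.W.scale_left_commute[of c])
  have cc: "\<forall>w1 w2 n. \<exists>N. \<forall>m\<ge>N. mscale W3 c (I w1 (n + of_nat m) w2) = 0"
    using Id by (metis M3.W.scale_zero_right)
  have d: "\<forall>w1 n w2. mscale W3 c (I (mY W1 (omega V) 0 w1) n w2)
      = mscale W3 (- n) (mscale W3 c (I w1 (n - 1) w2))"
    using Id by (simp add: M3.W.scale_left_commute[of c])
  have e: "\<forall>v w1 w2 (p::int) (q::int) (a::complex). \<exists>N. \<forall>M\<ge>N.
        (\<Sum>i=0..M. mscale W3 (of_int p gchoose i)
            (mscale W3 c (I (mY W1 v (q + int i) w1) (of_int p + a - of_nat i) w2)))
      = (\<Sum>i=0..M. mscale W3 ((-1) ^ i * (of_int q gchoose i))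
           (mY W3 v (p + q - int i) (mscale W3 c (I w1 (a + of_nat i) w2))
            - mscale W3 ((-1) powi q) (mscale W3 c (I w1 (of_int q + a - of_nat i) (mY W2 v (p + int i) w2)))))"
  proof (intro allI)
    fix v w1 w2 p q a
    obtain N1 where N1: "\<forall>M\<ge>N1.
        (\<Sum>i=0..M. mscale W3 (of_int p gchoose i)
            (I (mY W1 v (q + int i) w1) (of_int p + a - of_nat i) w2))
      = (\<Sum>i=0..M. mscale W3 ((-1) ^ i * (of_int q gchoose i))
           (mY W3 v (p + q - int i) (I w1 (a + of_nat i) w2)
            - mscale W3 ((-1) powi q) (I w1 (of_int q + a - of_nat i) (mY W2 v (p + int i) w2))))"
      using Id by blast
    have L: "(\<Sum>i=0..M. mscale W3 (of_int p gchoose i)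
            (mscale W3 c (I (mY W1 v (q + int i) w1) (of_int p + a - of_nat i) w2)))
      = mscale W3 c (\<Sum>i=0..M. mscale W3 (of_int p gchoose i)
            (I (mY W1 v (q + int i) w1) (of_int p + a - of_nat i) w2))" for M
      by (simp add: M3.W.scale_sum_right M3.W.scale_left_commute[of c] mult.commute)
    have R: "(\<Sum>i=0..M. mscale W3 ((-1) ^ i * (of_int q gchoose i))
           (mY W3 v (p + q - int i) (mscale W3 c (I w1 (a + of_nat i) w2))
            - mscale W3 ((-1) powi q) (mscale W3 c (I w1 (of_int q + a - of_nat i) (mY W2 v (p + int i) w2)))))
      = mscale W3 c (\<Sum>i=0..M. mscale W3 ((-1) ^ i * (of_int q gchoose i))
           (mY W3 v (p + q - int i) (I w1 (a + of_nat i) w2)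
            - mscale W3 ((-1) powi q) (I w1 (of_int q + a - of_nat i) (mY W2 v (p + int i) w2))))" for M
      by (simp add: M3.W.scale_sum_right M3.W.scale_left_commute[of c] is_linear_scale[OF M3.linY]
          M3.W.scale_right_diff_distrib mult_ac)
    show "\<exists>N. \<forall>M\<ge>N.
        (\<Sum>i=0..M. mscale W3 (of_int p gchoose i)
            (mscale W3 c (I (mY W1 v (q + int i) w1) (of_int p + a - of_nat i) w2)))
      = (\<Sum>i=0..M. mscale W3 ((-1) ^ i * (of_int q gchoose i))
           (mY W3 v (p + q - int i) (mscale W3 c (I w1 (a + of_nat i) w2))
            - mscale W3 ((-1) powi q) (mscale W3 c (I w1 (of_int q + a - of_nat i) (mY W2 v (p + int i) w2)))))"
      unfolding L R
    proof (intro exI[of _ N1] allI impI)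
      fix M assume "N1 \<le> M"
      then show "mscale W3 c (\<Sum>i=0..M. mscale W3 (of_int p gchoose i)
            (I (mY W1 v (q + int i) w1) (of_int p + a - of_nat i) w2))
        = mscale W3 c (\<Sum>i=0..M. mscale W3 ((-1) ^ i * (of_int q gchoose i))
           (mY W3 v (p + q - int i) (I w1 (a + of_nat i) w2)
            - mscale W3 ((-1) powi q) (I w1 (of_int q + a - of_nat i) (mY W2 v (p + int i) w2))))"
        using N1 by presburger
    qed
  qed
  show ?thesis unfolding is_intertwining_def using a b cc d e by blast
qed

end

theorem theorem3p1:
  fixes V :: "('v::ab_group_add) voa"
    and W1 :: "('v, 'w1::ab_group_add) vmod"
    and W2 :: "('v, 'w2::ab_group_add) vmod"
    and W3 :: "('v, 'w3::ab_group_add) vmod"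
  assumes "is_voa V"
    and "is_drg_mod V W1" and "is_drg_mod V W2" and "is_drg_mod V W3"
    and "C1_cofinite V W1" and "C1_cofinite V W2"
    and "contra_C1_cofinite V W3"
  shows "intertwining_space_fin_dim V W1 W2 W3"
proof -
  interpret T: tri V W1 W2 W3
    by (intro tri.intro drgm.intro voaL.intro drgm_axioms.intro assms)
  obtain HH1 where HH1: "finite HH1" "\<forall>p\<in>HH1. fst p \<in> Wr V W1 (snd p)"
    "\<And>w r. w \<in> Wr V W1 r \<Longrightarrow> w \<in> T.M1.W.span ({h\<in>fst`HH1. h \<in> Wr V W1 r} \<union> T.M1.Gen r)"
    by (rule T.M1.C1_span[OF assms(5)]) blast
  obtain HH2 where HH2: "finite HH2" "\<forall>p\<in>HH2. fst p \<in> Wr V W2 (snd p)"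
    "\<And>w r. w \<in> Wr V W2 r \<Longrightarrow> w \<in> T.M2.W.span ({h\<in>fst`HH2. h \<in> Wr V W2 r} \<union> T.M2.Gen r)"
    by (rule T.M2.C1_span[OF assms(6)]) blast
  obtain F3 where F3: "finite F3" "F3 \<subseteq> contra V W3" "contra V W3 \<subseteq> fun_span (F3 \<union> C1_contra V W3)"
    using assms(7) unfolding contra_C1_cofinite_def by blast
  obtain b1 where b1: "\<forall>r<b1. \<forall>w\<in>Wr V W1 r. w = 0" using T.M1.lower_bound by blast
  obtain b2 where b2: "\<forall>r<b2. \<forall>w\<in>Wr V W2 r. w = 0" using T.M2.lower_bound by blast
  obtain b3 where b3: "\<forall>r<b3. \<forall>w\<in>Wr V W3 r. w = 0" using T.M3.lower_bound by blast
  define R :: "('w3 \<Rightarrow> complex) \<Rightarrow> real set" where "R f = (SOME R. finite R \<and> (\<forall>r. r \<notin> R \<longrightarrow> (\<forall>w\<in>Wr V W3 r. f w = 0)))" for f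
  have R: "finite (R f) \<and> (\<forall>r. r \<notin> R f \<longrightarrow> (\<forall>w\<in>Wr V W3 r. f w = 0))" if "f \<in> contra V W3" for f
    unfolding R_def using T.M3.contra_supp[OF that] by (rule someI_ex)
  define K where "K = (\<lambda>(f,p1,p2,s). (f, fst p1, fst p2, (of_real (snd p1 + snd p2 - 1 - s) :: complex)))
     ` (F3 \<times> HH1 \<times> HH2 \<times> (\<Union>f\<in>F3. R f))"
  have finK: "finite K"
  proof -
    have "finite (\<Union>f\<in>F3. R f)" using F3(1,2) R by auto
    then show ?thesis unfolding K_def using F3(1) HH1(1) HH2(1) by (intro finite_imageI finite_cartesian_product)
  qed
  define Phi :: "('w1 \<Rightarrow> complex \<Rightarrow> 'w2 \<Rightarrow> 'w3) \<Rightarrow> (('w3 \<Rightarrow> complex) \<times> 'w1 \<times> 'w2 \<times> complex) \<Rightarrow> complex"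
    where "Phi J k = (if k \<in> K then fst k (J (fst (snd k)) (snd (snd (snd k))) (fst (snd (snd k)))) else 0)" for J k
  define sig :: "complex \<Rightarrow> ('w1 \<Rightarrow> complex \<Rightarrow> 'w2 \<Rightarrow> 'w3) \<Rightarrow> ('w1 \<Rightarrow> complex \<Rightarrow> 'w2 \<Rightarrow> 'w3)"
    where "sig c J = (\<lambda>w1 n w2. mscale W3 c (J w1 n w2))" for c J
  define ps :: "complex \<Rightarrow> ((('w3 \<Rightarrow> complex) \<times> 'w1 \<times> 'w2 \<times> complex) \<Rightarrow> complex) \<Rightarrow> ((('w3 \<Rightarrow> complex) \<times> 'w1 \<times> 'w2 \<times> complex) \<Rightarrow> complex)"
    where "ps c phi = (\<lambda>k. c * phi k)" for c phi
  have vsS: "vector_space sig"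
    by unfold_locales (simp_all add: sig_def fun_eq_iff T.M3.W.scale_right_distrib T.M3.W.scale_left_distrib)
  have vsP: "vector_space ps"
    by unfold_locales (simp_all add: ps_def fun_eq_iff algebra_simps)
  interpret S: vector_space sig by (rule vsS)
  interpret P: vector_space ps by (rule vsP)
  define II where "II = {J. is_intertwining V W1 W2 W3 J}"
  have subII: "S.subspace II"
    unfolding S.subspace_def II_def
  proof (intro conjI ballI allI)
    show "0 \<in> {J. is_intertwining V W1 W2 W3 J}"
      using T.intw_zero by (simp add: zero_fun_def)
    fix x y assume x: "x \<in> {J. is_intertwining V W1 W2 W3 J}" and y: "y \<in> {J. is_intertwining V W1 W2 W3 J}"
    show "x + y \<in> {J. is_intertwining V W1 W2 W3 J}"
      using T.intw_add[of x y] x y by (simp add: plus_fun_def)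
  next
    fix c x assume x: "x \<in> {J. is_intertwining V W1 W2 W3 J}"
    show "sig c x \<in> {J. is_intertwining V W1 W2 W3 J}"
      using T.intw_scale[of x c] x by (simp add: sig_def)
  qed
  have Kc: "fst k \<in> contra V W3" if "k \<in> K" for k
    using that F3(2) unfolding K_def by auto
  have linPhi: "Vector_Spaces.linear sig ps Phi"
    unfolding Vector_Spaces.linear_iff
  proof (intro conjI vsS vsP allI)
    fix x y
    show "Phi (x + y) = Phi x + Phi y"
      unfolding fun_eq_iff Phi_def using Kc T.M3.contra_add by (auto simp: plus_fun_def)
  next
    fix c x
    show "Phi (sig c x) = ps c (Phi x)"
      unfolding fun_eq_iff Phi_def sig_def ps_def using Kc T.M3.contra_scale by auto
  qed
  have mhPhi: "module_hom sig ps Phi" using linPhi by (simp add: module_hom_iff_linear)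
  have ker: "J = 0" if J: "J \<in> II" "Phi J = 0" for J
  proof -
    interpret IJ: intw V W1 W2 W3 J
      using J(1) by (intro intw.intro T.tri_axioms intw_axioms.intro) (simp add: II_def)
    have base: "f (J h1 a h2) = 0" if h: "h1 \<in> fst`HH1" "h2 \<in> fst`HH2" "f \<in> F3" for h1 h2 f a
    proof -
      obtain r1 where r1: "(h1, r1) \<in> HH1" using h(1) by force
      obtain r2 where r2: "(h2, r2) \<in> HH2" using h(2) by force
      have w1: "h1 \<in> Wr V W1 r1" using HH1(2) r1 by force
      have w2: "h2 \<in> Wr V W2 r2" using HH2(2) r2 by force
      have fc: "f \<in> contra V W3" using h(3) F3(2) by blast
      show ?thesis
      proof (cases "J h1 a h2 = 0")
        case True then show ?thesis using T.M3.contra_zero[OF fc] by simp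
      next
        case False
        have L: "T.M3.L0 (J h1 a h2) = mscale W3 (of_real r1 + of_real r2 - a - 1) (J h1 a h2)"
          by (rule IJ.out_weight[OF w1 w2])
        obtain l where l: "of_real r1 + of_real r2 - a - 1 = of_real l" using T.M3.real_eig[OF L False] by blast
        have Yl: "J h1 a h2 \<in> Wr V W3 l" using L l by (simp add: Wr_def)
        show ?thesis
        proof (cases "l \<in> R f")
          case False then show ?thesis using R[OF fc] Yl by blast
        next
          case True
          have a: "a = of_real (r1 + r2 - 1 - l)" using l by (simp add: algebra_simps)
          have "(f, h1, h2, a) \<in> K"
            unfolding K_def a using True h(3) r1 r2
            by (intro image_eqI[of _ _ "(f, (h1, r1), (h2, r2), l)"]) auto
          then have "Phi J (f, h1, h2, a) = f (J h1 a h2)" by (simp add: Phi_def)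
          then show ?thesis using J(2) by simp
        qed
      qed
    qed
    have Qn: "IJ.Q (b1 + b2 + b3 + real n)" for n
      apply (rule IJ.claim[of HH1 HH2 F3 b1 b2 b3 n])
            apply (erule HH1(3))
           apply (erule HH2(3))
          apply (rule F3(3))
         apply (rule base; assumption)
        apply (rule b1)
       apply (rule b2)
      apply (rule b3)
      done
    have hom: "J w1 a w2 = 0" if w: "w1 \<in> Wr V W1 r1" "w2 \<in> Wr V W2 r2" for w1 w2 r1 r2 a
    proof (rule T.M3.separation, intro ballI)
      fix g assume g: "g \<in> contra V W3"
      define n where "n = nat \<lceil>2 * r1 + 2 * r2 - Re a - 1 - (b1 + b2 + b3)\<rceil> + 1"
      have "2 * r1 + 2 * r2 - Re a - 1 < b1 + b2 + b3 + real n"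
        unfolding n_def by linarith
      then show "g (J w1 a w2) = 0" using IJ.QD[OF Qn w g] by blast
    qed
    have "J w1 a w2 = 0" for w1 a w2
    proof -
      obtain S1 c1 where S1: "finite S1" "\<forall>r\<in>S1. c1 r \<in> Wr V W1 r" "w1 = (\<Sum>r\<in>S1. c1 r)"
        using T.M1.grading by blast
      obtain S2 c2 where S2: "finite S2" "\<forall>r\<in>S2. c2 r \<in> Wr V W2 r" "w2 = (\<Sum>r\<in>S2. c2 r)"
        using T.M2.grading by blast
      have "J w1 a w2 = (\<Sum>r\<in>S1. J (c1 r) a w2)"
        unfolding S1(3) using is_linear_sum[OF IJ.linI1] by metis
      also have "\<dots> = (\<Sum>r\<in>S1. \<Sum>s\<in>S2. J (c1 r) a (c2 s))"
        unfolding S2(3) using is_linear_sum[OF IJ.linI2] by metis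
      also have "\<dots> = 0"
      proof (intro sum.neutral ballI)
        fix r s assume "r \<in> S1" "s \<in> S2"
        then show "J (c1 r) a (c2 s) = 0" using hom S1(2) S2(2) by blast
      qed
      finally show ?thesis .
    qed
    then show "J = 0" by (simp add: fun_eq_iff)
  qed
  obtain B where B: "B \<subseteq> II" "S.independent B" "II \<subseteq> S.span B"
    using S.maximal_independent_subset[of II] by blast
  have spB: "S.span B \<subseteq> II" using S.span_minimal[OF B(1) subII] .
  have inj: "inj_on Phi (S.span B)"
  proof (rule inj_onI)
    fix x y assume xy: "x \<in> S.span B" "y \<in> S.span B" "Phi x = Phi y"
    have "x - y \<in> II" using spB xy S.subspace_diff[OF subII] by blast
    moreover have "Phi (x - y) = 0" using module_hom.diff[OF mhPhi] xy(3) by simp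
    ultimately have "x - y = 0" using ker by blast
    then show "x = y" by simp
  qed
  have indP: "P.independent (Phi ` B)"
    using module_hom.dependent_inj_imageD[OF mhPhi _ inj] B(2) by blast
  define delta :: "(('w3 \<Rightarrow> complex) \<times> 'w1 \<times> 'w2 \<times> complex) \<Rightarrow> (('w3 \<Rightarrow> complex) \<times> 'w1 \<times> 'w2 \<times> complex) \<Rightarrow> complex"
    where "delta k = (\<lambda>k'. if k' = k then 1 else 0)" for k
  have PhiSpan: "Phi J \<in> P.span (delta ` K)" for J
  proof -
    have "Phi J = (\<Sum>k\<in>K. ps (Phi J k) (delta k))"
    proof
      fix x
      show "Phi J x = (\<Sum>k\<in>K. ps (Phi J k) (delta k)) x"
      proof (cases "x \<in> K")
        case True
        have "(\<Sum>k\<in>K. ps (Phi J k) (delta k)) x = (\<Sum>k\<in>K. (if k = x then Phi J k else 0))"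
          unfolding sum_fun_apply ps_def delta_def by (intro sum.cong) auto
        also have "\<dots> = Phi J x" using True finK by simp
        finally show ?thesis by simp
      next
        case False
        have "(\<Sum>k\<in>K. ps (Phi J k) (delta k)) x = (\<Sum>k\<in>K. (0::complex))"
          unfolding sum_fun_apply ps_def delta_def using False by (intro sum.cong) auto
        then show ?thesis using False by (simp add: Phi_def)
      qed
    qed
    also have "\<dots> \<in> P.span (delta ` K)" by (intro P.span_sum P.span_scale P.span_base imageI)
    finally show ?thesis .
  qed
  have "finite (Phi ` B)" using P.independent_span_bound[of "delta ` K" "Phi ` B"] finK indP PhiSpan by blast
  moreover have "inj_on Phi B" using inj S.span_superset by (rule inj_on_subset)
  ultimately have finB: "finite B" using finite_image_iff by blast
  show ?thesis unfolding intertwining_space_fin_dim_def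
  proof (intro exI[of _ B] conjI allI impI)
    show "finite B" by (rule finB)
    show "B \<subseteq> {I. is_intertwining V W1 W2 W3 I}" using B(1) by (simp add: II_def)
    fix I assume "is_intertwining V W1 W2 W3 I"
    then have "I \<in> S.span B" using B(3) by (auto simp: II_def)
    then obtain u where u: "I = (\<Sum>v\<in>B. sig (u v) v)" using S.span_finite[OF finB] by blast
    show "\<exists>c. I = (\<lambda>w1 n w2. \<Sum>J\<in>B. mscale W3 (c J) (J w1 n w2))"
      by (intro exI[of _ u]) (simp add: u fun_eq_iff sum_fun_apply sig_def)
  qed
qed

end
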